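(* Let $\alpha\in\mathbb R$ and let $\Sigma$ be a closed (compact, without boundary) $\alpha$-stationary surface in $\mathbb R^3\setminus\{0\}$. Then $\Sigma$ is a sphere centered at the origin (and consequently $\alpha=-2$).
   Context: Let $\Sigma$ be a connected oriented surface immersed in $\mathbb R^3\setminus\{0\}$ with unit normal $\nu$ and mean curvature $H$ (sum of the principal curvatures). For $\alpha\in\mathbb R$, $\Sigma$ is called $\alpha$-stationary if $H(p)=\alpha\,\frac{\langle\nu(p),p\rangle}{|p|^2}$ for all $p\in\Sigma$. *)

theory Defs
  imports "HOL-Analysis.Analysis"
begin

fun Ck_on :: "nat \<Rightarrow> 'a::euclidean_space set \<Rightarrow> ('a \<Rightarrow> 'b::real_normed_vector) \<Rightarrow> bool" where
  "Ck_on 0 U g = continuous_on U g"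
| "Ck_on (Suc k) U g =
     ((\<forall>x\<in>U. g differentiable (at x)) \<and>
      (\<forall>i\<in>Basis. Ck_on k U (\<lambda>x. frechet_derivative g (at x) i)))"

definition smooth_on :: "'a::euclidean_space set \<Rightarrow> ('a \<Rightarrow> 'b::real_normed_vector) \<Rightarrow> bool" where
  "smooth_on U g \<longleftrightarrow> (\<forall>k. Ck_on k U g)"

definition Du :: "(real \<times> real \<Rightarrow> real^3) \<Rightarrow> real \<times> real \<Rightarrow> real^3" where
  "Du X w = frechet_derivative X (at w) (1, 0)"

definition Dv :: "(real \<times> real \<Rightarrow> real^3) \<Rightarrow> real \<times> real \<Rightarrow> real^3" where
  "Dv X w = frechet_derivative X (at w) (0, 1)"

text \<open>Mean curvature (sum of principal curvatures) w.r.t. the unit normal N at the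
parameter w, via the first and second fundamental forms:
H = (e G - 2 f F + g E) / (E G - F^2), with e = <X_uu, N>, f = <X_uv, N>, g = <X_vv, N>.\<close>

definition mean_curv :: "(real \<times> real \<Rightarrow> real^3) \<Rightarrow> real^3 \<Rightarrow> real \<times> real \<Rightarrow> real" where
  "mean_curv X N w =
    (let E = Du X w \<bullet> Du X w; F = Du X w \<bullet> Dv X w; G = Dv X w \<bullet> Dv X w;
         e = Du (Du X) w \<bullet> N; f = Dv (Du X) w \<bullet> N; g = Dv (Dv X) w \<bullet> N
     in (e * G - 2 * f * F + g * E) / (E * G - F\<^sup>2))"

text \<open>Smooth compatibility of charts is automatic since f is a local immersion.\<close>

definition oriented_immersed_surface ::
  "'m topology \<Rightarrow> ((real \<times> real) set \<times> (real \<times> real \<Rightarrow> 'm)) set \<Rightarrow> ('m \<Rightarrow> real^3) \<Rightarrow> ('m \<Rightarrow> real^3) \<Rightarrow> bool"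
where
  "oriented_immersed_surface M A f \<nu> \<longleftrightarrow>
     Hausdorff_space M \<and>
     (\<forall>(U, \<phi>) \<in> A. open U \<and> openin M (\<phi> ` U) \<and>
         homeomorphic_map (top_of_set U) (subtopology M (\<phi> ` U)) \<phi>) \<and>
     (\<forall>p\<in>topspace M. \<exists>(U, \<phi>) \<in> A. p \<in> \<phi> ` U) \<and>
     (\<forall>(U, \<phi>) \<in> A. smooth_on U (f \<circ> \<phi>) \<and>
         (\<forall>w\<in>U. inj (frechet_derivative (f \<circ> \<phi>) (at w)))) \<and>
     continuous_map M euclidean \<nu> \<and>
     (\<forall>p\<in>topspace M. norm (\<nu> p) = 1) \<and>
     (\<forall>(U, \<phi>) \<in> A. \<forall>w\<in>U. \<nu> (\<phi> w) \<bullet> Du (f \<circ> \<phi>) w = 0 \<and> \<nu> (\<phi> w) \<bullet> Dv (f \<circ> \<phi>) w = 0)"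

definition alpha_stationary ::
  "real \<Rightarrow> 'm topology \<Rightarrow> ((real \<times> real) set \<times> (real \<times> real \<Rightarrow> 'm)) set \<Rightarrow> ('m \<Rightarrow> real^3) \<Rightarrow> ('m \<Rightarrow> real^3) \<Rightarrow> bool"
where
  "alpha_stationary \<alpha> M A f \<nu> \<longleftrightarrow>
     oriented_immersed_surface M A f \<nu> \<and>
     (\<forall>p\<in>topspace M. f p \<noteq> 0) \<and>
     (\<forall>(U, \<phi>) \<in> A. \<forall>w\<in>U.
        mean_curv (f \<circ> \<phi>) (\<nu> (\<phi> w)) w = \<alpha> * (\<nu> (\<phi> w) \<bullet> f (\<phi> w)) / (norm (f (\<phi> w)))\<^sup>2)"

end

theory Submission
  imports Defs "HOL-Analysis.Cross3"
begin


definition d2 :: "(real \<times> real) set \<Rightarrow> (real \<times> real \<Rightarrow> 'b::real_normed_vector) \<Rightarrow>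
   (real \<times> real \<Rightarrow> 'b) \<Rightarrow> (real \<times> real \<Rightarrow> 'b) \<Rightarrow> (real \<times> real \<Rightarrow> 'b) \<Rightarrow>
   (real \<times> real \<Rightarrow> 'b) \<Rightarrow> (real \<times> real \<Rightarrow> 'b) \<Rightarrow> (real \<times> real \<Rightarrow> 'b) \<Rightarrow> bool" where
  "d2 U g g1 g2 g11 g12 g21 g22 \<longleftrightarrow>
    (\<forall>w\<in>U. (g has_derivative (\<lambda>h. fst h *\<^sub>R g1 w + snd h *\<^sub>R g2 w)) (at w) \<and>
           (g1 has_derivative (\<lambda>h. fst h *\<^sub>R g11 w + snd h *\<^sub>R g12 w)) (at w) \<and>
           (g2 has_derivative (\<lambda>h. fst h *\<^sub>R g21 w + snd h *\<^sub>R g22 w)) (at w)) \<and>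
    continuous_on U g11 \<and> continuous_on U g12 \<and> continuous_on U g21 \<and> continuous_on U g22"

lemma line_deriv:
  fixes g :: "real \<times> real \<Rightarrow> real"
  assumes "(g has_derivative (\<lambda>k. fst k *\<^sub>R a + snd k *\<^sub>R b)) (at (w + t *\<^sub>R h))"
  shows "((\<lambda>s. g (w + s *\<^sub>R h)) has_real_derivative (fst h * a + snd h * b)) (at t)"
proof -
  have l: "((\<lambda>s. w + s *\<^sub>R h) has_derivative (\<lambda>s. s *\<^sub>R h)) (at t)"
    by (auto intro!: derivative_eq_intros)
  have "((\<lambda>s. g (w + s *\<^sub>R h)) has_derivative (\<lambda>s. fst (s *\<^sub>R h) *\<^sub>R a + snd (s *\<^sub>R h) *\<^sub>R b)) (at t)"
    using has_derivative_compose[OF l assms] by (simp add: o_def)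
  moreover have "(\<lambda>s. fst (s *\<^sub>R h) *\<^sub>R a + snd (s *\<^sub>R h) *\<^sub>R b) = (*) (fst h * a + snd h * b)"
    by (auto simp: algebra_simps)
  ultimately show ?thesis by (simp add: has_field_derivative_def)
qed

lemma deriv_x:
  fixes g :: "real \<times> real \<Rightarrow> real"
  assumes "(g has_derivative (\<lambda>k. fst k *\<^sub>R a + snd k *\<^sub>R b)) (at (x, y))"
  shows "((\<lambda>s. g (s, y)) has_real_derivative a) (at x)"
  using line_deriv[of g a b "(0, y)" x "(1, 0)"] assms by simp

lemma deriv_y:
  fixes g :: "real \<times> real \<Rightarrow> real"
  assumes "(g has_derivative (\<lambda>k. fst k *\<^sub>R a + snd k *\<^sub>R b)) (at (x, y))"
  shows "((\<lambda>s. g (x, s)) has_real_derivative b) (at y)"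
  using line_deriv[of g a b "(x, 0)" y "(0, 1)"] assms by simp

lemma dist_pair_le: "dist (x, y) (a, b) \<le> \<bar>x - a\<bar> + \<bar>y - b\<bar>"
  by (simp add: dist_Pair_Pair dist_real_def sqrt_sum_squares_le_sum_abs)

lemma schwarz:
  fixes g :: "real \<times> real \<Rightarrow> real"
  assumes U: "open U" and d: "d2 U g g1 g2 g11 g12 g21 g22" and w: "w \<in> U"
  shows "g12 w = g21 w"
proof (rule ccontr)
  assume ne: "g12 w \<noteq> g21 w"
  define e where "e = \<bar>g12 w - g21 w\<bar> / 2"
  have e: "e > 0" using ne by (simp add: e_def)
  obtain r where r: "r > 0" "ball w r \<subseteq> U" using U w open_contains_ball by blast
  have c12: "continuous_on U g12" and c21: "continuous_on U g21" using d by (auto simp: d2_def)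
  obtain d1 where d1: "d1 > 0" "\<forall>x'\<in>U. dist x' w < d1 \<longrightarrow> dist (g12 x') (g12 w) < e"
    using c12 w e unfolding continuous_on_iff by blast
  obtain d2' where d2': "d2' > 0" "\<forall>x'\<in>U. dist x' w < d2' \<longrightarrow> dist (g21 x') (g21 w) < e"
    using c21 w e unfolding continuous_on_iff by blast
  define t where "t = min r (min d1 d2') / 4"
  have t: "t > 0" "t < r/2" "t < d1/2" "t < d2'/2" using r d1 d2' by (auto simp: t_def)
  obtain a b where wab: "w = (a, b)" by (cases w)
  have near: "dist (x, y) w \<le> 2 * t"
    if "a \<le> x" "x \<le> a + t" "b \<le> y" "y \<le> b + t" for x y
  proof -
    have "dist (x, y) w \<le> \<bar>x - a\<bar> + \<bar>y - b\<bar>" using dist_pair_le wab by simp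
    also have "\<dots> \<le> 2 * t" using that by auto
    finally show ?thesis .
  qed
  have inU: "(x, y) \<in> U" if "a \<le> x" "x \<le> a + t" "b \<le> y" "y \<le> b + t" for x y
    using near[OF that] t r(2) by (auto simp: dist_commute)
  have dg: "(g has_derivative (\<lambda>h. fst h *\<^sub>R g1 (x,y) + snd h *\<^sub>R g2 (x,y))) (at (x,y))"
    "(g1 has_derivative (\<lambda>h. fst h *\<^sub>R g11 (x,y) + snd h *\<^sub>R g12 (x,y))) (at (x,y))"
    "(g2 has_derivative (\<lambda>h. fst h *\<^sub>R g21 (x,y) + snd h *\<^sub>R g22 (x,y))) (at (x,y))"
    if "a \<le> x" "x \<le> a + t" "b \<le> y" "y \<le> b + t" for x y
    using d inU[OF that] unfolding d2_def by blast+
  define D where "D = g (a+t, b+t) - g (a+t, b) - g (a, b+t) + g (a, b)"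
  obtain \<xi> where \<xi>: "a < \<xi>" "\<xi> < a + t"
    "(g (a+t, b+t) - g (a+t, b)) - (g (a, b+t) - g (a, b)) = t * (g1 (\<xi>, b+t) - g1 (\<xi>, b))"
  proof -
    have "\<exists>z. a < z \<and> z < a + t \<and> (\<lambda>x. g (x, b+t) - g (x, b)) (a+t) - (\<lambda>x. g (x, b+t) - g (x, b)) a
        = (a + t - a) * (g1 (z, b+t) - g1 (z, b))"
      by (rule MVT2) (use t in \<open>auto intro!: derivative_intros deriv_x dg\<close>)
    then show ?thesis using that by auto
  qed
  obtain \<eta> where \<eta>: "b < \<eta>" "\<eta> < b + t" "g1 (\<xi>, b+t) - g1 (\<xi>, b) = t * g12 (\<xi>, \<eta>)"
  proof -
    have "\<exists>z. b < z \<and> z < b + t \<and> (\<lambda>y. g1 (\<xi>, y)) (b+t) - (\<lambda>y. g1 (\<xi>, y)) b = (b + t - b) * g12 (\<xi>, z)"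
      by (rule MVT2) (use t \<xi> in \<open>auto intro!: deriv_y dg\<close>)
    then show ?thesis using that by auto
  qed
  obtain \<eta>' where \<eta>': "b < \<eta>'" "\<eta>' < b + t"
    "(g (a+t, b+t) - g (a, b+t)) - (g (a+t, b) - g (a, b)) = t * (g2 (a+t, \<eta>') - g2 (a, \<eta>'))"
  proof -
    have "\<exists>z. b < z \<and> z < b + t \<and> (\<lambda>y. g (a+t, y) - g (a, y)) (b+t) - (\<lambda>y. g (a+t, y) - g (a, y)) b
        = (b + t - b) * (g2 (a+t, z) - g2 (a, z))"
      by (rule MVT2) (use t in \<open>auto intro!: derivative_intros deriv_y dg\<close>)
    then show ?thesis using that by auto
  qed
  obtain \<xi>' where \<xi>': "a < \<xi>'" "\<xi>' < a + t" "g2 (a+t, \<eta>') - g2 (a, \<eta>') = t * g21 (\<xi>', \<eta>')"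
  proof -
    have "\<exists>z. a < z \<and> z < a + t \<and> (\<lambda>x. g2 (x, \<eta>')) (a+t) - (\<lambda>x. g2 (x, \<eta>')) a = (a + t - a) * g21 (z, \<eta>')"
      by (rule MVT2) (use t \<eta>' in \<open>auto intro!: deriv_x dg\<close>)
    then show ?thesis using that by auto
  qed
  have "t * (t * g12 (\<xi>, \<eta>)) = t * (t * g21 (\<xi>', \<eta>'))"
    using \<xi>(3) \<eta>(3) \<eta>'(3) \<xi>'(3) by (simp add: algebra_simps)
  then have eq: "g12 (\<xi>, \<eta>) = g21 (\<xi>', \<eta>')" using t by simp
  have "dist (g12 (\<xi>, \<eta>)) (g12 w) < e"
    using d1(2) inU[of \<xi> \<eta>] near[of \<xi> \<eta>] \<xi> \<eta> t by auto
  moreover have "dist (g21 (\<xi>', \<eta>')) (g21 w) < e"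
    using d2'(2) inU[of \<xi>' \<eta>'] near[of \<xi>' \<eta>'] \<xi>' \<eta>' t by auto
  moreover have "\<bar>g12 w - g21 w\<bar> \<le> \<bar>g12 (\<xi>, \<eta>) - g12 w\<bar> + \<bar>g21 (\<xi>', \<eta>') - g21 w\<bar>"
    using eq by linarith
  moreover have "\<And>A B P::real. A < P/2 \<Longrightarrow> B < P/2 \<Longrightarrow> P \<le> A + B \<Longrightarrow> False" by linarith
  ultimately show False unfolding e_def dist_real_def by blast
qed



lemma second_deriv_test:
  fixes \<gamma> \<gamma>' \<gamma>'' :: "real \<Rightarrow> real"
  assumes r: "r > 0"
    and d1: "\<And>t. \<bar>t\<bar> < r \<Longrightarrow> (\<gamma> has_real_derivative \<gamma>' t) (at t)"
    and d2: "\<And>t. \<bar>t\<bar> < r \<Longrightarrow> (\<gamma>' has_real_derivative \<gamma>'' t) (at t)"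
    and c: "isCont \<gamma>'' 0"
    and mx: "\<And>t. \<bar>t\<bar> < r \<Longrightarrow> \<gamma> t \<le> \<gamma> 0"
  shows "\<gamma>' 0 = 0 \<and> \<gamma>'' 0 \<le> 0"
proof
  show g0: "\<gamma>' 0 = 0"
    by (rule DERIV_local_max[OF d1[of 0] r]) (use r mx in auto)
  show "\<gamma>'' 0 \<le> 0"
  proof (rule ccontr)
    assume "\<not> \<gamma>'' 0 \<le> 0"
    then have pos: "\<gamma>'' 0 > 0" by simp
    have "\<forall>e>0. \<exists>s>0. \<forall>x. x \<noteq> 0 \<and> norm (x - 0) < s \<longrightarrow> norm (\<gamma>'' x - \<gamma>'' 0) < e"
      using c unfolding isCont_def LIM_eq .
    moreover have "\<gamma>'' 0 / 2 > 0" using pos by simp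
    ultimately have "\<exists>s>0. \<forall>x. x \<noteq> 0 \<and> norm (x - 0) < s \<longrightarrow> norm (\<gamma>'' x - \<gamma>'' 0) < \<gamma>'' 0 / 2"
      by blast
    then obtain \<delta> where \<delta>: "\<delta> > 0" "\<And>t. t \<noteq> 0 \<Longrightarrow> \<bar>t\<bar> < \<delta> \<Longrightarrow> \<bar>\<gamma>'' t - \<gamma>'' 0\<bar> < \<gamma>'' 0 / 2"
      by auto
    define t where "t = min \<delta> r / 2"
    have t: "t > 0" "t < \<delta>" "t < r" using \<delta> r by (auto simp: t_def)
    obtain \<xi> where \<xi>: "0 < \<xi>" "\<xi> < t" "\<gamma> t - \<gamma> 0 = (t - 0) * \<gamma>' \<xi>"
      using MVT2[of 0 t \<gamma> \<gamma>'] t d1 by auto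
    obtain \<eta> where \<eta>: "0 < \<eta>" "\<eta> < \<xi>" "\<gamma>' \<xi> - \<gamma>' 0 = (\<xi> - 0) * \<gamma>'' \<eta>"
      using MVT2[of 0 \<xi> \<gamma>' \<gamma>''] t d2 \<xi> by auto
    have "\<bar>\<gamma>'' \<eta> - \<gamma>'' 0\<bar> < \<gamma>'' 0 / 2" using \<delta>(2)[of \<eta>] \<eta> \<xi> t by auto
    then have "- (\<gamma>'' \<eta> - \<gamma>'' 0) < \<gamma>'' 0 / 2" by (rule abs_less_iff[THEN iffD1, THEN conjunct2])
    then have "\<gamma>'' \<eta> > 0" using pos by linarith
    then have "\<gamma>' \<xi> > 0" using \<eta> \<xi> g0 by simp
    then have "t * \<gamma>' \<xi> > 0" using t by simp
    then have "\<gamma> t > \<gamma> 0" using \<xi>(3) by simp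
    then show False using mx[of t] t by simp
  qed
qed

lemma maxtest:
  fixes u :: "real \<times> real \<Rightarrow> real"
  assumes U: "open U" and d: "d2 U u u1 u2 u11 u12 u21 u22" and w0: "w0 \<in> U"
    and mx: "\<And>w. w \<in> U \<Longrightarrow> u w \<le> u w0"
  shows "u1 w0 = 0" "u2 w0 = 0"
    "\<And>h1 h2. h1\<^sup>2 * u11 w0 + 2 * h1 * h2 * u12 w0 + h2\<^sup>2 * u22 w0 \<le> 0"
proof -
  have sym: "u12 w0 = u21 w0" using schwarz[OF U d w0] .
  obtain r where r: "r > 0" "ball w0 r \<subseteq> U" using U w0 open_contains_ball by blast
  have dU: "\<And>w. w \<in> U \<Longrightarrow> (u has_derivative (\<lambda>h. fst h *\<^sub>R u1 w + snd h *\<^sub>R u2 w)) (at w) \<and>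
           (u1 has_derivative (\<lambda>h. fst h *\<^sub>R u11 w + snd h *\<^sub>R u12 w)) (at w) \<and>
           (u2 has_derivative (\<lambda>h. fst h *\<^sub>R u21 w + snd h *\<^sub>R u22 w)) (at w)"
    using d by (auto simp: d2_def)
  have cont: "continuous_on U u11" "continuous_on U u12" "continuous_on U u21" "continuous_on U u22"
    using d by (auto simp: d2_def)
  have main: "(fst h * u1 w0 + snd h * u2 w0) = 0 \<and>
      fst h * (fst h * u11 w0 + snd h * u12 w0) + snd h * (fst h * u21 w0 + snd h * u22 w0) \<le> 0" for h
  proof -
    define \<rho> where "\<rho> = r / (norm h + 1)"
    have "norm h + 1 > 0" by (simp add: add_nonneg_pos)
    then have \<rho>: "\<rho> > 0" using r by (simp add: \<rho>_def)
    have inU: "w0 + t *\<^sub>R h \<in> U" if "\<bar>t\<bar> < \<rho>" for t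
    proof -
      have "norm (t *\<^sub>R h) = \<bar>t\<bar> * norm h" by simp
      also have "\<dots> \<le> \<bar>t\<bar> * (norm h + 1)" by (simp add: mult_left_mono)
      also have "\<dots> < \<rho> * (norm h + 1)" using that \<open>norm h + 1 > 0\<close> by (rule mult_strict_right_mono)
      also have "\<rho> * (norm h + 1) = r" using \<open>norm h + 1 > 0\<close> unfolding \<rho>_def by simp
      finally have "dist w0 (w0 + t *\<^sub>R h) < r" by (simp add: dist_norm)
      then show ?thesis using r(2) by auto
    qed
    let ?p = "\<lambda>t. w0 + t *\<^sub>R h"
    let ?g1 = "\<lambda>t. fst h * u1 (?p t) + snd h * u2 (?p t)"
    let ?g2 = "\<lambda>t. fst h * (fst h * u11 (?p t) + snd h * u12 (?p t)) + snd h * (fst h * u21 (?p t) + snd h * u22 (?p t))"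
    have "?g1 0 = 0 \<and> ?g2 0 \<le> 0"
    proof (rule second_deriv_test[OF \<rho>, where \<gamma>="\<lambda>t. u (?p t)"])
      fix t :: real assume t: "\<bar>t\<bar> < \<rho>"
      show "((\<lambda>t. u (?p t)) has_real_derivative ?g1 t) (at t)"
        by (rule line_deriv[OF conjunct1[OF dU[OF inU[OF t]]]])
      have a: "((\<lambda>s. u1 (?p s)) has_real_derivative fst h * u11 (?p t) + snd h * u12 (?p t)) (at t)"
        by (rule line_deriv[OF conjunct1[OF conjunct2[OF dU[OF inU[OF t]]]]])
      have b: "((\<lambda>s. u2 (?p s)) has_real_derivative fst h * u21 (?p t) + snd h * u22 (?p t)) (at t)"
        by (rule line_deriv[OF conjunct2[OF conjunct2[OF dU[OF inU[OF t]]]]])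
      show "(?g1 has_real_derivative ?g2 t) (at t)"
        by (rule DERIV_add[OF DERIV_cmult[OF a, of "fst h"] DERIV_cmult[OF b, of "snd h"]])
      show "u (?p t) \<le> u (?p 0)" using mx[OF inU[OF t]] by simp
    next
      have pc: "isCont ?p 0" by (intro continuous_intros)
      have "isCont f w0" if "continuous_on U f" for f :: "real \<times> real \<Rightarrow> real"
        using that U w0 continuous_on_eq_continuous_at by blast
      then have ic: "isCont (\<lambda>t. f (?p t)) 0" if "continuous_on U f" for f :: "real \<times> real \<Rightarrow> real"
        using that isCont_o2[OF pc] by (metis add.right_neutral scale_zero_left)
      have c11: "isCont (\<lambda>t. u11 (?p t)) 0" by (rule ic[OF cont(1)])
      have c12: "isCont (\<lambda>t. u12 (?p t)) 0" by (rule ic[OF cont(2)])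
      have c21: "isCont (\<lambda>t. u21 (?p t)) 0" by (rule ic[OF cont(3)])
      have c22: "isCont (\<lambda>t. u22 (?p t)) 0" by (rule ic[OF cont(4)])
      show "isCont ?g2 0"
        by (intro continuous_add continuous_mult continuous_const c11 c12 c21 c22)
    qed
    then show ?thesis by simp
  qed
  show "u1 w0 = 0" using main[of "(1,0)"] by simp
  show "u2 w0 = 0" using main[of "(0,1)"] by simp
  fix h1 h2 show "h1\<^sup>2 * u11 w0 + 2 * h1 * h2 * u12 w0 + h2\<^sup>2 * u22 w0 \<le> 0"
  proof -
    have m: "h1 * (h1 * u11 w0 + h2 * u12 w0) + h2 * (h1 * u21 w0 + h2 * u22 w0) \<le> 0"
      using main[of "(h1,h2)"] by simp
    have "h1\<^sup>2 * u11 w0 + 2 * h1 * h2 * u12 w0 + h2\<^sup>2 * u22 w0 =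
          h1 * (h1 * u11 w0 + h2 * u12 w0) + h2 * (h1 * u21 w0 + h2 * u22 w0)"
      unfolding sym power2_eq_square by algebra
    then show ?thesis using m by simp
  qed
qed

lemma trace_ineq:
  fixes a11 a12 a22 q11 q12 q22 :: real
  assumes a: "a11 \<ge> 0" "a22 \<ge> 0" "a12\<^sup>2 \<le> a11 * a22"
    and q: "\<And>h1 h2. h1\<^sup>2 * q11 + 2 * h1 * h2 * q12 + h2\<^sup>2 * q22 \<le> 0"
  shows "a11 * q11 + 2 * a12 * q12 + a22 * q22 \<le> 0"
proof -
  have q11: "q11 \<le> 0" using q[of 1 0] by simp
  have q22: "q22 \<le> 0" using q[of 0 1] by simp
  have qq: "q12\<^sup>2 \<le> q11 * q22"
  proof (cases "q22 = 0")
    case True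
    have "q12 = 0"
    proof (rule ccontr)
      assume "q12 \<noteq> 0"
      define t where "t = (1 - q11) / (2 * q12)"
      have "1\<^sup>2 * q11 + 2 * 1 * t * q12 + t\<^sup>2 * q22 \<le> 0" by (rule q)
      moreover have "2 * 1 * t * q12 = 1 - q11" unfolding t_def using \<open>q12 \<noteq> 0\<close> by simp
      ultimately show False using True by simp
    qed
    then show ?thesis using True by simp
  next
    case False
    then have n: "q22 < 0" using q22 by simp
    have "q22\<^sup>2 * q11 + 2 * q22 * (- q12) * q12 + (- q12)\<^sup>2 * q22 \<le> 0" by (rule q)
    then have "q22 * (q11 * q22 - q12\<^sup>2) \<le> 0" by (simp add: algebra_simps power2_eq_square)
    then have "q11 * q22 - q12\<^sup>2 \<ge> 0" using n by (simp add: mult_le_0_iff)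
    then show ?thesis by simp
  qed
  define A where "A = a11 * (- q11)"
  define B where "B = a22 * (- q22)"
  define C where "C = \<bar>a12 * q12\<bar>"
  have A: "A \<ge> 0" and B: "B \<ge> 0" using a q11 q22 by (auto simp: A_def B_def mult_nonneg_nonpos)
  have "C\<^sup>2 = a12\<^sup>2 * q12\<^sup>2" by (simp add: C_def power_mult_distrib)
  also have "\<dots> \<le> (a11 * a22) * (q11 * q22)"
    using a qq by (intro mult_mono) (auto simp: mult_nonneg_nonneg)
  also have "\<dots> = A * B" by (simp add: A_def B_def)
  finally have CAB: "C\<^sup>2 \<le> A * B" .
  have "(2 * C)\<^sup>2 \<le> (A + B)\<^sup>2"
  proof -
    have "(2 * C)\<^sup>2 = 4 * C\<^sup>2" by (simp add: power2_eq_square)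
    also have "\<dots> \<le> 4 * (A * B)" using CAB by simp
    also have "\<dots> \<le> (A + B)\<^sup>2"
    proof -
      have "(A + B)\<^sup>2 - 4 * (A * B) = (A - B)\<^sup>2" by (simp add: power2_eq_square algebra_simps)
      moreover have "(A - B)\<^sup>2 \<ge> 0" by simp
      ultimately show ?thesis by linarith
    qed
    finally show ?thesis .
  qed
  then have "2 * C \<le> A + B" by (rule power2_le_imp_le) (use A B in simp)
  moreover have "2 * a12 * q12 \<le> 2 * C" by (simp add: C_def)
  ultimately show ?thesis by (simp add: A_def B_def)
qed

lemma max_op_le:
  fixes u :: "real \<times> real \<Rightarrow> real"
  assumes U: "open U" and d: "d2 U u u1 u2 u11 u12 u21 u22" and w0: "w0 \<in> U"
    and mx: "\<And>w. w \<in> U \<Longrightarrow> u w \<le> u w0"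
    and a: "a11 \<ge> 0" "a22 \<ge> 0" "a12\<^sup>2 \<le> a11 * a22"
  shows "a11 * u11 w0 + 2 * a12 * u12 w0 + a22 * u22 w0 + b1 * u1 w0 + b2 * u2 w0 \<le> 0"
  using trace_ineq[OF a maxtest(3)[OF U d w0 mx]] maxtest(1,2)[OF U d w0 mx] by simp



lemma d2_cont:
  assumes "d2 U g g1 g2 g11 g12 g21 g22"
  shows "continuous_on U g" "continuous_on U g1" "continuous_on U g2"
  using assms unfolding d2_def
  by (meson continuous_at_imp_continuous_on has_derivative_continuous)+

lemma d2_subset:
  assumes "d2 U g g1 g2 g11 g12 g21 g22" "V \<subseteq> U"
  shows "d2 V g g1 g2 g11 g12 g21 g22"
  using assms unfolding d2_def by (meson continuous_on_subset subsetD)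

lemma d2_add_cmult:
  fixes u v :: "real \<times> real \<Rightarrow> real"
  assumes du: "d2 U u u1 u2 u11 u12 u21 u22" and dv: "d2 U v v1 v2 v11 v12 v21 v22"
  shows "d2 U (\<lambda>x. u x + c * v x) (\<lambda>x. u1 x + c * v1 x) (\<lambda>x. u2 x + c * v2 x)
     (\<lambda>x. u11 x + c * v11 x) (\<lambda>x. u12 x + c * v12 x) (\<lambda>x. u21 x + c * v21 x) (\<lambda>x. u22 x + c * v22 x)"
  unfolding d2_def
proof (intro conjI ballI)
  fix w assume w: "w \<in> U"
  have lin: "\<And>a b a' b' :: real. (\<lambda>h. fst h *\<^sub>R a + snd h *\<^sub>R b + c * (fst h *\<^sub>R a' + snd h *\<^sub>R b'))
     = (\<lambda>h. fst h *\<^sub>R (a + c * a') + snd h *\<^sub>R (b + c * b'))"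
    by (auto simp: algebra_simps)
  have h: "\<And>f f1 f2 g g1 g2 :: real \<times> real \<Rightarrow> real.
     (f has_derivative (\<lambda>h. fst h *\<^sub>R f1 w + snd h *\<^sub>R f2 w)) (at w) \<Longrightarrow>
     (g has_derivative (\<lambda>h. fst h *\<^sub>R g1 w + snd h *\<^sub>R g2 w)) (at w) \<Longrightarrow>
     ((\<lambda>x. f x + c * g x) has_derivative (\<lambda>h. fst h *\<^sub>R (f1 w + c * g1 w) + snd h *\<^sub>R (f2 w + c * g2 w))) (at w)"
    by (rule has_derivative_eq_rhs[OF has_derivative_add[OF _ has_derivative_mult_right]], assumption, assumption)
       (rule lin)
  show "((\<lambda>x. u x + c * v x) has_derivative (\<lambda>h. fst h *\<^sub>R (u1 w + c * v1 w) + snd h *\<^sub>R (u2 w + c * v2 w))) (at w)"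
    using du dv w unfolding d2_def by (intro h) auto
  show "((\<lambda>x. u1 x + c * v1 x) has_derivative (\<lambda>h. fst h *\<^sub>R (u11 w + c * v11 w) + snd h *\<^sub>R (u12 w + c * v12 w))) (at w)"
    using du dv w unfolding d2_def by (intro h) auto
  show "((\<lambda>x. u2 x + c * v2 x) has_derivative (\<lambda>h. fst h *\<^sub>R (u21 w + c * v21 w) + snd h *\<^sub>R (u22 w + c * v22 w))) (at w)"
    using du dv w unfolding d2_def by (intro h) auto
qed (use du dv in \<open>auto simp: d2_def intro!: continuous_intros\<close>)

lemma distsq: "(dist x y)\<^sup>2 = (fst x - fst y)\<^sup>2 + (snd x - snd y)\<^sup>2"
  by (cases x; cases y) (simp add: dist_Pair_Pair dist_real_def)

lemma posdef:
  fixes a11 a12 a22 s t :: real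
  assumes "a11 > 0" "a12\<^sup>2 < a11 * a22" "(s, t) \<noteq> (0, 0)"
  shows "a11 * s\<^sup>2 + 2 * a12 * s * t + a22 * t\<^sup>2 > 0"
proof (cases "t = 0")
  case True
  then have "s \<noteq> 0" using assms(3) by simp
  then show ?thesis using True assms(1) by simp
next
  case False
  have "a11 * (a11 * s\<^sup>2 + 2 * a12 * s * t + a22 * t\<^sup>2) = (a11 * s + a12 * t)\<^sup>2 + (a11 * a22 - a12\<^sup>2) * t\<^sup>2"
    by (simp add: power2_eq_square algebra_simps)
  moreover have "(a11 * a22 - a12\<^sup>2) * t\<^sup>2 > 0" using False assms(2) by simp
  moreover have "(a11 * s + a12 * t)\<^sup>2 \<ge> 0" by simp
  ultimately have "a11 * (a11 * s\<^sup>2 + 2 * a12 * s * t + a22 * t\<^sup>2) > 0" by linarith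
  then show ?thesis using assms(1) by (simp add: zero_less_mult_iff)
qed

definition bE :: "real \<Rightarrow> real \<times> real \<Rightarrow> real \<times> real \<Rightarrow> real" where
  "bE \<gamma> c x = exp (- \<gamma> * ((fst x - fst c)\<^sup>2 + (snd x - snd c)\<^sup>2))"

lemma bE_deriv:
  "(bE \<gamma> c has_derivative (\<lambda>h. fst h *\<^sub>R (-2 * \<gamma> * (fst x - fst c) * bE \<gamma> c x) + snd h *\<^sub>R (-2 * \<gamma> * (snd x - snd c) * bE \<gamma> c x))) (at x)"
proof -
  have f1: "((\<lambda>x. fst x - fst c) has_derivative (\<lambda>h. fst h)) (at x)"
    using has_derivative_diff[OF has_derivative_fst[OF has_derivative_ident] has_derivative_const] by simp
  have f2: "((\<lambda>x. snd x - snd c) has_derivative (\<lambda>h. snd h)) (at x)"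
    using has_derivative_diff[OF has_derivative_snd[OF has_derivative_ident] has_derivative_const] by simp
  have q: "((\<lambda>x. - \<gamma> * ((fst x - fst c) * (fst x - fst c) + (snd x - snd c) * (snd x - snd c))) has_derivative
      (\<lambda>h. - \<gamma> * (((fst x - fst c) * fst h + fst h * (fst x - fst c)) + ((snd x - snd c) * snd h + snd h * (snd x - snd c))))) (at x)"
    by (intro has_derivative_mult_right has_derivative_add has_derivative_mult f1 f2)
  have e: "(exp has_derivative (\<lambda>y. exp z * y)) (at z)" for z :: real
    using DERIV_exp[of z] by (simp add: has_field_derivative_def)
  have "((\<lambda>x. exp (- \<gamma> * ((fst x - fst c) * (fst x - fst c) + (snd x - snd c) * (snd x - snd c)))) has_derivative
      (\<lambda>h. exp (- \<gamma> * ((fst x - fst c) * (fst x - fst c) + (snd x - snd c) * (snd x - snd c))) *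
         (- \<gamma> * (((fst x - fst c) * fst h + fst h * (fst x - fst c)) + ((snd x - snd c) * snd h + snd h * (snd x - snd c)))))) (at x)"
    using has_derivative_compose[OF q e] by (simp add: o_def)
  then show ?thesis
    unfolding bE_def power2_eq_square
    by (rule has_derivative_eq_rhs) (auto simp: fun_eq_iff algebra_simps)
qed

lemma bE_pos: "bE \<gamma> c x > 0" by (simp add: bE_def)

lemma bE_le1: "\<gamma> \<ge> 0 \<Longrightarrow> bE \<gamma> c x \<le> 1"
  unfolding bE_def by (simp add: mult_nonneg_nonneg)

lemma bE_dist: "bE \<gamma> c x = exp (- \<gamma> * (dist x c)\<^sup>2)"
  by (simp add: bE_def distsq)

lemma bE_less: "\<gamma> > 0 \<Longrightarrow> dist x c > dist y c \<Longrightarrow> bE \<gamma> c x < bE \<gamma> c y"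
  unfolding bE_dist by (simp add: power_strict_mono)

lemma cont_bE: "continuous_on S (bE \<gamma> c)"
  unfolding bE_def by (intro continuous_intros)

lemma bar_d2:
  "d2 UNIV (\<lambda>x. bE \<gamma> c x - k)
     (\<lambda>x. -2 * \<gamma> * (fst x - fst c) * bE \<gamma> c x) (\<lambda>x. -2 * \<gamma> * (snd x - snd c) * bE \<gamma> c x)
     (\<lambda>x. (4 * \<gamma>\<^sup>2 * (fst x - fst c)\<^sup>2 - 2 * \<gamma>) * bE \<gamma> c x)
     (\<lambda>x. 4 * \<gamma>\<^sup>2 * (fst x - fst c) * (snd x - snd c) * bE \<gamma> c x)
     (\<lambda>x. 4 * \<gamma>\<^sup>2 * (fst x - fst c) * (snd x - snd c) * bE \<gamma> c x)
     (\<lambda>x. (4 * \<gamma>\<^sup>2 * (snd x - snd c)\<^sup>2 - 2 * \<gamma>) * bE \<gamma> c x)"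
  unfolding d2_def
proof (intro conjI ballI)
  fix x :: "real \<times> real"
  have f1: "((\<lambda>x. -2 * \<gamma> * (fst x - fst c)) has_derivative (\<lambda>h. -2 * \<gamma> * fst h)) (at x)"
    using has_derivative_mult_right[OF has_derivative_diff[OF has_derivative_fst[OF has_derivative_ident] has_derivative_const], of "-2 * \<gamma>" "fst c"] by simp
  have f2: "((\<lambda>x. -2 * \<gamma> * (snd x - snd c)) has_derivative (\<lambda>h. -2 * \<gamma> * snd h)) (at x)"
    using has_derivative_mult_right[OF has_derivative_diff[OF has_derivative_snd[OF has_derivative_ident] has_derivative_const], of "-2 * \<gamma>" "snd c"] by simp
  show "((\<lambda>x. bE \<gamma> c x - k) has_derivative (\<lambda>h. fst h *\<^sub>R (-2 * \<gamma> * (fst x - fst c) * bE \<gamma> c x) + snd h *\<^sub>R (-2 * \<gamma> * (snd x - snd c) * bE \<gamma> c x))) (at x)"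
    using has_derivative_diff[OF bE_deriv has_derivative_const] by simp
  show "((\<lambda>x. -2 * \<gamma> * (fst x - fst c) * bE \<gamma> c x) has_derivative
     (\<lambda>h. fst h *\<^sub>R ((4 * \<gamma>\<^sup>2 * (fst x - fst c)\<^sup>2 - 2 * \<gamma>) * bE \<gamma> c x) + snd h *\<^sub>R (4 * \<gamma>\<^sup>2 * (fst x - fst c) * (snd x - snd c) * bE \<gamma> c x))) (at x)"
    by (rule has_derivative_eq_rhs[OF has_derivative_mult[OF f1 bE_deriv]])
       (auto simp: fun_eq_iff algebra_simps power2_eq_square)
  show "((\<lambda>x. -2 * \<gamma> * (snd x - snd c) * bE \<gamma> c x) has_derivative
     (\<lambda>h. fst h *\<^sub>R (4 * \<gamma>\<^sup>2 * (fst x - fst c) * (snd x - snd c) * bE \<gamma> c x) + snd h *\<^sub>R ((4 * \<gamma>\<^sup>2 * (snd x - snd c)\<^sup>2 - 2 * \<gamma>) * bE \<gamma> c x))) (at x)"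
    by (rule has_derivative_eq_rhs[OF has_derivative_mult[OF f2 bE_deriv]])
       (auto simp: fun_eq_iff algebra_simps power2_eq_square)
qed (intro continuous_intros cont_bE)+

lemma bar_L:
  fixes a11 a12 a22 b1 b2 \<gamma> E s t :: real
  shows "a11 * ((4 * \<gamma>\<^sup>2 * s\<^sup>2 - 2 * \<gamma>) * E) + 2 * a12 * (4 * \<gamma>\<^sup>2 * s * t * E)
    + a22 * ((4 * \<gamma>\<^sup>2 * t\<^sup>2 - 2 * \<gamma>) * E) + b1 * (-2 * \<gamma> * s * E) + b2 * (-2 * \<gamma> * t * E)
    = 2 * \<gamma> * E * (2 * \<gamma> * (a11 * s\<^sup>2 + 2 * a12 * s * t + a22 * t\<^sup>2) - (a11 + a22 + b1 * s + b2 * t))"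
  by (simp add: power2_eq_square algebra_simps)

lemma apollonius:
  fixes x z y :: "real \<times> real"
  shows "2 * (dist x z)\<^sup>2 + 2 * (dist x y)\<^sup>2 = 4 * (dist x ((1/2) *\<^sub>R (z + y)))\<^sup>2 + (dist z y)\<^sup>2"
  unfolding distsq by (simp add: power2_eq_square field_simps)

lemma strong_max:
  fixes u a11 a12 a22 b1 b2 :: "real \<times> real \<Rightarrow> real"
  assumes U: "open U" and d: "d2 U u u1 u2 u11 u12 u21 u22"
    and ca: "continuous_on U a11" "continuous_on U a12" "continuous_on U a22"
      "continuous_on U b1" "continuous_on U b2"
    and pd: "\<And>w. w \<in> U \<Longrightarrow> a11 w > 0 \<and> (a12 w)\<^sup>2 < a11 w * a22 w"
    and L: "\<And>w. w \<in> U \<Longrightarrow> a11 w * u11 w + 2 * a12 w * u12 w + a22 w * u22 w + b1 w * u1 w + b2 w * u2 w \<ge> 0"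
    and w0: "w0 \<in> U" and mx: "\<And>w. w \<in> U \<Longrightarrow> u w \<le> u w0"
  shows "\<exists>r>0. \<forall>w\<in>ball w0 r. u w = u w0"
proof -
  obtain \<rho> where \<rho>: "\<rho> > 0" "cball w0 \<rho> \<subseteq> U" using U w0 open_contains_cball by blast
  have cu: "continuous_on U u" using d2_cont[OF d] by blast
  define Mx where "Mx = u w0"
  show ?thesis
  proof (rule exI[of _ "\<rho>/4"], intro conjI ballI)
    show "\<rho>/4 > 0" using \<rho> by simp
    fix z assume z: "z \<in> ball w0 (\<rho>/4)"
    show "u z = u w0"
    proof (rule ccontr)
      assume nz: "u z \<noteq> u w0"
      have dz: "dist w0 z < \<rho>/4" using z by simp
      have zU: "z \<in> U" using dz \<rho> by (intro subsetD[OF \<rho>(2)]) simp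
      define K where "K = cball w0 \<rho> \<inter> u -` {Mx}"
      have cK: "closed K" unfolding K_def
        by (rule continuous_closed_preimage) (use continuous_on_subset[OF cu \<rho>(2)] in auto)
      have w0K: "w0 \<in> K" using \<rho> by (simp add: K_def Mx_def)
      obtain y where yK: "y \<in> K" and ymin: "\<And>k. k \<in> K \<Longrightarrow> dist z y \<le> dist z k"
        using distance_attains_inf[OF cK, of z] w0K by blast
      define d1 where "d1 = dist z y"
      have zK: "z \<notin> K" using nz by (simp add: K_def Mx_def)
      have "y \<noteq> z" using yK zK by blast
      then have d1pos: "d1 > 0" by (simp add: d1_def)
      have d1le: "d1 < \<rho>/4" using ymin[OF w0K] dz by (simp add: d1_def dist_commute)
      have A: "x \<in> U \<and> u x < Mx" if "dist z x < d1" for x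
      proof -
        have "dist w0 x \<le> dist w0 z + dist z x" by (rule dist_triangle)
        then have "dist w0 x < \<rho>" using dz that d1le \<rho>(1) by linarith
        then have xc: "x \<in> cball w0 \<rho>" by simp
        then have xU: "x \<in> U" using \<rho>(2) by blast
        have "u x \<noteq> Mx"
        proof
          assume "u x = Mx"
          then have "x \<in> K" using xc by (simp add: K_def)
          then show False using ymin[of x] that by (simp add: d1_def)
        qed
        then show ?thesis using mx[OF xU] xU by (simp add: Mx_def)
      qed
      define c where "c = (1/2) *\<^sub>R (z + y)"
      define dd where "dd = d1 / 2"
      have ddpos: "dd > 0" using d1pos by (simp add: dd_def)
      have dcy: "dist y c = dd"
      proof -
        have "y - c = (1/2) *\<^sub>R (y - z)" by (auto simp: c_def prod_eq_iff field_simps)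
        then have "dist y c = (1/2) * dist y z" by (simp add: dist_norm)
        then show ?thesis by (simp add: dd_def d1_def dist_commute)
      qed
      have B: "dist z x < d1" if "dist c x \<le> dd" "x \<noteq> y" for x
      proof -
        have ap: "2 * (dist x z)\<^sup>2 + 2 * (dist x y)\<^sup>2 = 4 * (dist x c)\<^sup>2 + (dist z y)\<^sup>2"
          unfolding c_def by (rule apollonius)
        have "(dist x c)\<^sup>2 \<le> dd\<^sup>2" using that(1) by (simp add: dist_commute power_mono)
        moreover have "(dist x y)\<^sup>2 > 0" using that(2) by simp
        moreover have "(dist z y)\<^sup>2 = d1\<^sup>2" by (simp add: d1_def)
        moreover have "4 * dd\<^sup>2 = d1\<^sup>2" by (simp add: dd_def power2_eq_square)
        ultimately have "(dist x z)\<^sup>2 < d1\<^sup>2" using ap by linarith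
        then have "dist x z < d1" using d1pos by (simp add: power_less_imp_less_base)
        then show ?thesis by (simp add: dist_commute)
      qed
      define Kb where "Kb = cball y (dd/2)"
      have yU: "dist w0 y < \<rho>/2"
      proof -
        have "dist w0 y \<le> dist w0 z + dist z y" by (rule dist_triangle)
        then show ?thesis using dz d1le by (simp add: d1_def)
      qed
      have KbU: "Kb \<subseteq> U"
      proof
        fix x assume "x \<in> Kb"
        then have "dist y x \<le> dd/2" by (simp add: Kb_def)
        moreover have "dist w0 x \<le> dist w0 y + dist y x" by (rule dist_triangle)
        moreover have "dd/2 < \<rho>/2" using d1le \<rho>(1) unfolding dd_def by linarith
        ultimately have "dist w0 x \<le> \<rho>" using yU by linarith
        then show "x \<in> U" using \<rho>(2) by auto
      qed
      have cKb: "compact Kb" "Kb \<noteq> {}" using ddpos by (auto simp: Kb_def)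
      have far: "dist x c \<ge> dd/2" if "x \<in> Kb" for x
      proof -
        have "dist y c \<le> dist y x + dist x c" by (rule dist_triangle)
        then show ?thesis using that dcy by (simp add: Kb_def)
      qed
      define Q where "Q = (\<lambda>x. a11 x * (fst x - fst c)\<^sup>2 + 2 * a12 x * (fst x - fst c) * (snd x - snd c) + a22 x * (snd x - snd c)\<^sup>2)"
      define Rf where "Rf = (\<lambda>x. a11 x + a22 x + b1 x * (fst x - fst c) + b2 x * (snd x - snd c))"
      have Qpos: "Q x > 0" if "x \<in> Kb" for x
      proof -
        have "x \<noteq> c" using far[OF that] ddpos by auto
        then have "(fst x - fst c, snd x - snd c) \<noteq> (0, 0)" by (auto simp: prod_eq_iff)
        then show ?thesis unfolding Q_def using pd[OF subsetD[OF KbU that]]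
          by (intro posdef) auto
      qed
      have cQ: "continuous_on Kb Q" unfolding Q_def
        using continuous_on_subset[OF ca(1) KbU] continuous_on_subset[OF ca(2) KbU] continuous_on_subset[OF ca(3) KbU]
        by (intro continuous_intros) auto
      have cR: "continuous_on Kb Rf" unfolding Rf_def
        using continuous_on_subset[OF ca(1) KbU] continuous_on_subset[OF ca(3) KbU]
          continuous_on_subset[OF ca(4) KbU] continuous_on_subset[OF ca(5) KbU]
        by (intro continuous_intros) auto
      obtain xm where xm: "xm \<in> Kb" "\<And>x. x \<in> Kb \<Longrightarrow> Q xm \<le> Q x"
        using continuous_attains_inf[OF cKb cQ] by blast
      obtain xM where xM: "xM \<in> Kb" "\<And>x. x \<in> Kb \<Longrightarrow> Rf x \<le> Rf xM"
        using continuous_attains_sup[OF cKb cR] by blast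
      define m where "m = Q xm"
      have mpos: "m > 0" using Qpos[OF xm(1)] by (simp add: m_def)
      define \<gamma> where "\<gamma> = (\<bar>Rf xM\<bar> + 1) / m"
      have \<gamma>pos: "\<gamma> > 0" using mpos by (simp add: \<gamma>_def add_nonneg_pos)
      have Lpos: "2 * \<gamma> * Q x - Rf x > 0" if "x \<in> Kb" for x
      proof -
        have "2 * \<gamma> * m = 2 * (\<bar>Rf xM\<bar> + 1)" using mpos by (simp add: \<gamma>_def)
        moreover have "2 * \<gamma> * m \<le> 2 * \<gamma> * Q x" using xm(2)[OF that] \<gamma>pos by (simp add: m_def)
        moreover have "Rf x \<le> \<bar>Rf xM\<bar>" using xM(2)[OF that] by linarith
        moreover have "\<bar>Rf xM\<bar> \<ge> 0" by simp
        moreover have aux: "0 < b - f" if "a = 2 * (e + 1)" "a \<le> b" "f \<le> e" "0 \<le> e" for a b e f :: real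
          using that by simp
        ultimately show ?thesis by blast
      qed
      define k where "k = bE \<gamma> c y"
      define v where "v = (\<lambda>x. bE \<gamma> c x - k)"
      have vy: "v y = 0" by (simp add: v_def k_def)
      have vneg: "v x < 0" if "dist c x > dd" for x
        unfolding v_def k_def using bE_less[OF \<gamma>pos, where x=x and y=y and c=c] that dcy by (simp add: dist_commute)
      have vle: "v x < 1" for x
        using bE_le1[of \<gamma> c x] \<gamma>pos bE_pos[of \<gamma> c y] by (simp add: v_def k_def)
      define S1 where "S1 = sphere y (dd/2) \<inter> cball c dd"
      have S1U: "S1 \<subseteq> Kb" by (auto simp: S1_def Kb_def)
      have S1lt: "u x < Mx" if "x \<in> S1" for x
      proof -
        have "x \<noteq> y" using that ddpos by (auto simp: S1_def)
        then have "dist z x < d1" using B that by (auto simp: S1_def)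
        then show ?thesis using A by blast
      qed
      obtain \<delta> where \<delta>: "\<delta> > 0" "\<And>x. x \<in> S1 \<Longrightarrow> u x \<le> Mx - \<delta>"
      proof (cases "S1 = {}")
        case True
        then show ?thesis using that[of 1] by simp
      next
        case False
        have "compact S1" by (auto simp: S1_def intro!: compact_Int_closed)
        moreover have "continuous_on S1 u" using continuous_on_subset[OF cu] S1U KbU by blast
        ultimately obtain xs where xs: "xs \<in> S1" "\<And>x. x \<in> S1 \<Longrightarrow> u x \<le> u xs"
          using continuous_attains_sup[of S1 u] False by blast
        have "u xs < Mx" using S1lt[OF xs(1)] .
        show ?thesis
        proof (rule that[of "Mx - u xs"])
          show "0 < Mx - u xs" using \<open>u xs < Mx\<close> by simp
          fix x assume "x \<in> S1"
          then show "u x \<le> Mx - (Mx - u xs)" using xs(2) by simp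
        qed
      qed
      define \<epsilon> where "\<epsilon> = \<delta> / 2"
      have \<epsilon>: "\<epsilon> > 0" using \<delta> by (simp add: \<epsilon>_def)
      define W where "W = (\<lambda>x. u x + \<epsilon> * v x)"
      have Wbd: "W x < Mx" if "x \<in> sphere y (dd/2)" for x
      proof (cases "dist c x \<le> dd")
        case True
        then have "x \<in> S1" using that by (simp add: S1_def)
        then have "u x \<le> Mx - \<delta>" by (rule \<delta>(2))
        moreover have "\<epsilon> * v x < \<epsilon>" using vle[of x] \<epsilon> by simp
        moreover have "\<epsilon> < \<delta>" using \<delta>(1) by (simp add: \<epsilon>_def)
        ultimately show ?thesis unfolding W_def by linarith
      next
        case False
        then have "v x < 0" using vneg by simp
        then have "\<epsilon> * v x < 0" using \<epsilon> by (simp add: mult_pos_neg)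
        moreover have "x \<in> U" using that KbU by (auto simp: Kb_def)
        then have "u x \<le> Mx" using mx by (simp add: Mx_def)
        ultimately show ?thesis by (simp add: W_def)
      qed
      have dv: "d2 UNIV v
         (\<lambda>x. -2 * \<gamma> * (fst x - fst c) * bE \<gamma> c x) (\<lambda>x. -2 * \<gamma> * (snd x - snd c) * bE \<gamma> c x)
         (\<lambda>x. (4 * \<gamma>\<^sup>2 * (fst x - fst c)\<^sup>2 - 2 * \<gamma>) * bE \<gamma> c x)
         (\<lambda>x. 4 * \<gamma>\<^sup>2 * (fst x - fst c) * (snd x - snd c) * bE \<gamma> c x)
         (\<lambda>x. 4 * \<gamma>\<^sup>2 * (fst x - fst c) * (snd x - snd c) * bE \<gamma> c x)
         (\<lambda>x. (4 * \<gamma>\<^sup>2 * (snd x - snd c)\<^sup>2 - 2 * \<gamma>) * bE \<gamma> c x)"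
        unfolding v_def by (rule bar_d2)
      define Ub where "Ub = ball y (dd/2)"
      have UbKb: "Ub \<subseteq> Kb" by (auto simp: Ub_def Kb_def)
      have dW: "d2 Ub W
         (\<lambda>x. u1 x + \<epsilon> * (-2 * \<gamma> * (fst x - fst c) * bE \<gamma> c x))
         (\<lambda>x. u2 x + \<epsilon> * (-2 * \<gamma> * (snd x - snd c) * bE \<gamma> c x))
         (\<lambda>x. u11 x + \<epsilon> * ((4 * \<gamma>\<^sup>2 * (fst x - fst c)\<^sup>2 - 2 * \<gamma>) * bE \<gamma> c x))
         (\<lambda>x. u12 x + \<epsilon> * (4 * \<gamma>\<^sup>2 * (fst x - fst c) * (snd x - snd c) * bE \<gamma> c x))
         (\<lambda>x. u21 x + \<epsilon> * (4 * \<gamma>\<^sup>2 * (fst x - fst c) * (snd x - snd c) * bE \<gamma> c x))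
         (\<lambda>x. u22 x + \<epsilon> * ((4 * \<gamma>\<^sup>2 * (snd x - snd c)\<^sup>2 - 2 * \<gamma>) * bE \<gamma> c x))"
        unfolding W_def
        by (rule d2_add_cmult[OF d2_subset[OF d] d2_subset[OF dv]]) (use UbKb KbU in auto)
      have cW: "continuous_on Kb W"
        using d2_cont(1)[OF d2_subset[OF d KbU]] d2_cont(1)[OF d2_subset[OF dv, of Kb]]
        unfolding W_def by (intro continuous_intros) auto
      obtain p where p: "p \<in> Kb" "\<And>x. x \<in> Kb \<Longrightarrow> W x \<le> W p"
        using continuous_attains_sup[OF cKb cW] by blast
      have "W y = Mx" using vy yK by (simp add: W_def K_def)
      then have Wp: "W p \<ge> Mx" using p(2)[of y] ddpos by (simp add: Kb_def)
      have pUb: "p \<in> Ub"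
      proof (rule ccontr)
        assume "p \<notin> Ub"
        then have "p \<in> sphere y (dd/2)" using p(1) by (auto simp: Ub_def Kb_def)
        then have "W p < Mx" by (rule Wbd)
        then show False using Wp by linarith
      qed
      have pU: "p \<in> U" using pUb UbKb KbU by blast
      have pdp: "a11 p \<ge> 0" "a22 p \<ge> 0" "(a12 p)\<^sup>2 \<le> a11 p * a22 p"
      proof -
        have h: "a11 p > 0" "(a12 p)\<^sup>2 < a11 p * a22 p" using pd[OF pU] by auto
        moreover have "(a12 p)\<^sup>2 \<ge> 0" by simp
        ultimately have "a11 p * a22 p > 0" by linarith
        then show "a22 p \<ge> 0" using h(1) by (simp add: zero_less_mult_iff)
        show "a11 p \<ge> 0" "(a12 p)\<^sup>2 \<le> a11 p * a22 p" using h by auto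
      qed
      have le: "a11 p * (u11 p + \<epsilon> * ((4 * \<gamma>\<^sup>2 * (fst p - fst c)\<^sup>2 - 2 * \<gamma>) * bE \<gamma> c p))
           + 2 * a12 p * (u12 p + \<epsilon> * (4 * \<gamma>\<^sup>2 * (fst p - fst c) * (snd p - snd c) * bE \<gamma> c p))
           + a22 p * (u22 p + \<epsilon> * ((4 * \<gamma>\<^sup>2 * (snd p - snd c)\<^sup>2 - 2 * \<gamma>) * bE \<gamma> c p))
           + b1 p * (u1 p + \<epsilon> * (-2 * \<gamma> * (fst p - fst c) * bE \<gamma> c p))
           + b2 p * (u2 p + \<epsilon> * (-2 * \<gamma> * (snd p - snd c) * bE \<gamma> c p)) \<le> 0"
        by (rule max_op_le[OF _ dW pUb _ pdp]) (use p(2) UbKb in \<open>auto simp: Ub_def\<close>)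
      define Lu where "Lu = a11 p * u11 p + 2 * a12 p * u12 p + a22 p * u22 p + b1 p * u1 p + b2 p * u2 p"
      define Lv where "Lv = a11 p * ((4 * \<gamma>\<^sup>2 * (fst p - fst c)\<^sup>2 - 2 * \<gamma>) * bE \<gamma> c p)
           + 2 * a12 p * (4 * \<gamma>\<^sup>2 * (fst p - fst c) * (snd p - snd c) * bE \<gamma> c p)
           + a22 p * ((4 * \<gamma>\<^sup>2 * (snd p - snd c)\<^sup>2 - 2 * \<gamma>) * bE \<gamma> c p)
           + b1 p * (-2 * \<gamma> * (fst p - fst c) * bE \<gamma> c p)
           + b2 p * (-2 * \<gamma> * (snd p - snd c) * bE \<gamma> c p)"
      have split: "Lu + \<epsilon> * Lv \<le> 0"
      proof -
        have "Lu + \<epsilon> * Lv = a11 p * (u11 p + \<epsilon> * ((4 * \<gamma>\<^sup>2 * (fst p - fst c)\<^sup>2 - 2 * \<gamma>) * bE \<gamma> c p))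
           + 2 * a12 p * (u12 p + \<epsilon> * (4 * \<gamma>\<^sup>2 * (fst p - fst c) * (snd p - snd c) * bE \<gamma> c p))
           + a22 p * (u22 p + \<epsilon> * ((4 * \<gamma>\<^sup>2 * (snd p - snd c)\<^sup>2 - 2 * \<gamma>) * bE \<gamma> c p))
           + b1 p * (u1 p + \<epsilon> * (-2 * \<gamma> * (fst p - fst c) * bE \<gamma> c p))
           + b2 p * (u2 p + \<epsilon> * (-2 * \<gamma> * (snd p - snd c) * bE \<gamma> c p))"
          unfolding Lu_def Lv_def by (simp add: algebra_simps)
        then show ?thesis using le by simp
      qed
      have "Lv = 2 * \<gamma> * bE \<gamma> c p * (2 * \<gamma> * Q p - Rf p)"
        unfolding Lv_def Q_def Rf_def by (rule bar_L)
      moreover have "2 * \<gamma> * bE \<gamma> c p > 0" using \<gamma>pos bE_pos by simp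
      ultimately have "Lv > 0" using Lpos[OF subsetD[OF UbKb pUb]] by simp
      moreover have "Lu \<ge> 0" using L[OF pU] by (simp add: Lu_def)
      ultimately have "Lu + \<epsilon> * Lv > 0" using \<epsilon> by (simp add: add_nonneg_pos)
      then show False using split by simp
    qed
  qed
qed



lemma perp3_zero:
  fixes A B N Z :: "real^3"
  assumes D: "(A \<bullet> A) * (B \<bullet> B) - (A \<bullet> B)\<^sup>2 > 0"
    and N: "N \<bullet> N = 1" "N \<bullet> A = 0" "N \<bullet> B = 0"
    and Z: "Z \<bullet> A = 0" "Z \<bullet> B = 0" "Z \<bullet> N = 0"
  shows "Z = 0"
proof -
  define K where "K = cross3 A B"
  have KK: "K \<bullet> K > 0"
  proof -
    have "(norm K)\<^sup>2 = (norm A)\<^sup>2 * (norm B)\<^sup>2 - (A \<bullet> B)\<^sup>2" unfolding K_def by (rule norm_cross)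
    then show ?thesis using D by (simp add: power2_norm_eq_inner)
  qed
  have colin: "Y = ((K \<bullet> Y) / (K \<bullet> K)) *\<^sub>R K" if "Y \<bullet> A = 0" "Y \<bullet> B = 0" for Y
  proof -
    have "cross3 Y K = (Y \<bullet> B) *\<^sub>R A - (Y \<bullet> A) *\<^sub>R B" unfolding K_def by (rule Lagrange)
    then have "cross3 Y K = 0" using that by simp
    then have "cross3 K Y = 0" by (metis cross_skew neg_equal_0_iff_equal)
    then have "cross3 K (cross3 K Y) = 0" by simp
    moreover have "cross3 K (cross3 K Y) = (K \<bullet> Y) *\<^sub>R K - (K \<bullet> K) *\<^sub>R Y" by (rule Lagrange)
    ultimately have "(K \<bullet> K) *\<^sub>R Y = (K \<bullet> Y) *\<^sub>R K" by simp
    then have "(1 / (K \<bullet> K)) *\<^sub>R ((K \<bullet> K) *\<^sub>R Y) = (1 / (K \<bullet> K)) *\<^sub>R ((K \<bullet> Y) *\<^sub>R K)" by simp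
    then show ?thesis using KK by simp
  qed
  have cZ: "Z = ((K \<bullet> Z) / (K \<bullet> K)) *\<^sub>R K" using colin Z by simp
  have cN: "N = ((K \<bullet> N) / (K \<bullet> K)) *\<^sub>R K" using colin N by simp
  have "N \<bullet> N = ((K \<bullet> N) / (K \<bullet> K)) * ((K \<bullet> N) / (K \<bullet> K)) * (K \<bullet> K)"
    by (subst (1 2) cN) (simp add: inner_commute)
  then have kn: "K \<bullet> N \<noteq> 0" using N(1) by (metis div_0 mult_zero_left zero_neq_one)
  have "Z \<bullet> N = ((K \<bullet> Z) / (K \<bullet> K)) * ((K \<bullet> N) / (K \<bullet> K)) * (K \<bullet> K)"
    by (subst cZ, subst cN) (simp add: inner_commute)
  then have "K \<bullet> Z = 0" using Z(3) kn KK by simp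
  then show ?thesis using cZ by simp
qed

lemma decomp:
  fixes A B N Y :: "real^3"
  assumes D: "(A \<bullet> A) * (B \<bullet> B) - (A \<bullet> B)\<^sup>2 > 0"
    and N: "N \<bullet> N = 1" "N \<bullet> A = 0" "N \<bullet> B = 0"
  shows "Y = (((B \<bullet> B) * (Y \<bullet> A) - (A \<bullet> B) * (Y \<bullet> B)) / ((A \<bullet> A) * (B \<bullet> B) - (A \<bullet> B)\<^sup>2)) *\<^sub>R A
           + (((A \<bullet> A) * (Y \<bullet> B) - (A \<bullet> B) * (Y \<bullet> A)) / ((A \<bullet> A) * (B \<bullet> B) - (A \<bullet> B)\<^sup>2)) *\<^sub>R B
           + (N \<bullet> Y) *\<^sub>R N" (is "Y = ?a *\<^sub>R A + ?b *\<^sub>R B + ?c *\<^sub>R N")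
proof -
  define Dd where "Dd = (A \<bullet> A) * (B \<bullet> B) - (A \<bullet> B)\<^sup>2"
  have Dd: "Dd \<noteq> 0" using D by (simp add: Dd_def)
  define Z where "Z = Y - (?a *\<^sub>R A + ?b *\<^sub>R B + ?c *\<^sub>R N)"
  have NA: "A \<bullet> N = 0" "B \<bullet> N = 0" using N by (auto simp: inner_commute)
  have BA: "B \<bullet> A = A \<bullet> B" by (rule inner_commute)
  have "Z \<bullet> A = (Y \<bullet> A) - (?a * (A \<bullet> A) + ?b * (A \<bullet> B))"
    unfolding Z_def using N BA by (simp add: inner_diff_left inner_add_left)
  also have "\<dots> = 0" using Dd unfolding Dd_def[symmetric]
    by (simp add: field_simps power2_eq_square) (simp add: Dd_def power2_eq_square algebra_simps)
  finally have zA: "Z \<bullet> A = 0" .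
  have "Z \<bullet> B = (Y \<bullet> B) - (?a * (A \<bullet> B) + ?b * (B \<bullet> B))"
    unfolding Z_def using N by (simp add: inner_diff_left inner_add_left)
  also have "\<dots> = 0" using Dd unfolding Dd_def[symmetric]
    by (simp add: field_simps power2_eq_square) (simp add: Dd_def power2_eq_square algebra_simps)
  finally have zB: "Z \<bullet> B = 0" .
  have YN: "Y \<bullet> N = N \<bullet> Y" by (rule inner_commute)
  have zN: "Z \<bullet> N = 0"
    unfolding Z_def using N NA YN by (simp add: inner_diff_left inner_add_left)
  have "Z = 0" by (rule perp3_zero[OF D N zA zB zN])
  then show ?thesis by (simp add: Z_def)
qed

lemma keyid:
  fixes a b c E F G p11 q11 e p12 q12 f p22 q22 g D :: real
  assumes D: "D \<noteq> 0" and Dd: "D = E * G - F\<^sup>2"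
  shows "(G / D) * (2 * ((a * p11 + b * q11 + c * e) + E))
     + 2 * (- F / D) * (2 * ((a * p12 + b * q12 + c * f) + F))
     + (E / D) * (2 * ((a * p22 + b * q22 + c * g) + G))
     + (- (G * (G * p11 - 2 * F * p12 + E * p22) - F * (G * q11 - 2 * F * q12 + E * q22)) / D\<^sup>2) * (2 * (a * E + b * F))
     + (- (E * (G * q11 - 2 * F * q12 + E * q22) - F * (G * p11 - 2 * F * p12 + E * p22)) / D\<^sup>2) * (2 * (a * F + b * G))
   = 2 * c * ((e * G - 2 * f * F + g * E) / D) + 4"
proof -
  define P where "P = G * p11 - 2 * F * p12 + E * p22"
  define Q where "Q = G * q11 - 2 * F * q12 + E * q22"
  have t2: "(- (G * P - F * Q)) * (2 * (a * E + b * F)) + (- (E * Q - F * P)) * (2 * (a * F + b * G))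
      = -2 * D * (a * P + b * Q)"
    unfolding Dd by (simp add: power2_eq_square algebra_simps)
  have t1: "G * (2 * ((a * p11 + b * q11 + c * e) + E)) + 2 * (- F) * (2 * ((a * p12 + b * q12 + c * f) + F))
      + E * (2 * ((a * p22 + b * q22 + c * g) + G)) = 2 * (a * P + b * Q) + 2 * c * (e * G - 2 * f * F + g * E) + 4 * D"
    unfolding Dd P_def Q_def by (simp add: power2_eq_square algebra_simps)
  have "(G / D) * (2 * ((a * p11 + b * q11 + c * e) + E))
     + 2 * (- F / D) * (2 * ((a * p12 + b * q12 + c * f) + F))
     + (E / D) * (2 * ((a * p22 + b * q22 + c * g) + G))
     = (2 * (a * P + b * Q) + 2 * c * (e * G - 2 * f * F + g * E) + 4 * D) / D"
    unfolding t1[symmetric] using D by (simp add: field_simps)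
  moreover have "(- (G * P - F * Q) / D\<^sup>2) * (2 * (a * E + b * F)) + (- (E * Q - F * P) / D\<^sup>2) * (2 * (a * F + b * G))
      = (-2 * D * (a * P + b * Q)) / D\<^sup>2"
    unfolding t2[symmetric] by (simp add: add_divide_distrib)
  moreover have "(-2 * D * (a * P + b * Q)) / D\<^sup>2 = (-2 * (a * P + b * Q)) / D"
    using D by (simp add: power2_eq_square field_simps)
  moreover have "(2 * (a * P + b * Q) + 2 * c * (e * G - 2 * f * F + g * E) + 4 * D) / D + (-2 * (a * P + b * Q)) / D
     = (2 * c * (e * G - 2 * f * F + g * E) + 4 * D) / D"
    by (simp add: add_divide_distrib[symmetric])
  moreover have "(2 * c * (e * G - 2 * f * F + g * E) + 4 * D) / D = 2 * c * ((e * G - 2 * f * F + g * E) / D) + 4"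
    using D by (simp add: field_simps)
  ultimately show ?thesis unfolding P_def[symmetric] Q_def[symmetric] by (simp only: add.assoc)
qed

lemma keygrad:
  fixes a b E F G :: real
  shows "(G * (2 * (a * E + b * F)) - F * (2 * (a * F + b * G))) * (2 * (a * E + b * F))
     + (E * (2 * (a * F + b * G)) - F * (2 * (a * E + b * F))) * (2 * (a * F + b * G))
     = 4 * (E * G - F\<^sup>2) * (a\<^sup>2 * E + 2 * a * b * F + b\<^sup>2 * G)"
  by (simp add: power2_eq_square algebra_simps)

lemma d2_inner_self:
  fixes X X1 X2 X11 X12 X21 X22 :: "real \<times> real \<Rightarrow> real^3"
  assumes d: "d2 U X X1 X2 X11 X12 X21 X22"
  shows "d2 U (\<lambda>w. X w \<bullet> X w) (\<lambda>w. 2 * (X1 w \<bullet> X w)) (\<lambda>w. 2 * (X2 w \<bullet> X w))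
     (\<lambda>w. 2 * (X11 w \<bullet> X w + X1 w \<bullet> X1 w)) (\<lambda>w. 2 * (X12 w \<bullet> X w + X1 w \<bullet> X2 w))
     (\<lambda>w. 2 * (X21 w \<bullet> X w + X2 w \<bullet> X1 w)) (\<lambda>w. 2 * (X22 w \<bullet> X w + X2 w \<bullet> X2 w))"
  unfolding d2_def
proof (intro conjI ballI)
  fix w assume w: "w \<in> U"
  have dX: "(X has_derivative (\<lambda>h. fst h *\<^sub>R X1 w + snd h *\<^sub>R X2 w)) (at w)"
    and dX1: "(X1 has_derivative (\<lambda>h. fst h *\<^sub>R X11 w + snd h *\<^sub>R X12 w)) (at w)"
    and dX2: "(X2 has_derivative (\<lambda>h. fst h *\<^sub>R X21 w + snd h *\<^sub>R X22 w)) (at w)"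
    using d w by (auto simp: d2_def)
  show "((\<lambda>w. X w \<bullet> X w) has_derivative (\<lambda>h. fst h *\<^sub>R (2 * (X1 w \<bullet> X w)) + snd h *\<^sub>R (2 * (X2 w \<bullet> X w)))) (at w)"
    by (rule has_derivative_eq_rhs[OF has_derivative_inner[OF dX dX]])
       (auto simp: fun_eq_iff inner_add_left inner_add_right inner_commute algebra_simps)
  show "((\<lambda>w. 2 * (X1 w \<bullet> X w)) has_derivative (\<lambda>h. fst h *\<^sub>R (2 * (X11 w \<bullet> X w + X1 w \<bullet> X1 w)) + snd h *\<^sub>R (2 * (X12 w \<bullet> X w + X1 w \<bullet> X2 w)))) (at w)"
    by (rule has_derivative_eq_rhs[OF has_derivative_mult_right[OF has_derivative_inner[OF dX1 dX]]])
       (auto simp: fun_eq_iff inner_add_left inner_add_right inner_commute algebra_simps)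
  show "((\<lambda>w. 2 * (X2 w \<bullet> X w)) has_derivative (\<lambda>h. fst h *\<^sub>R (2 * (X21 w \<bullet> X w + X2 w \<bullet> X1 w)) + snd h *\<^sub>R (2 * (X22 w \<bullet> X w + X2 w \<bullet> X2 w)))) (at w)"
    by (rule has_derivative_eq_rhs[OF has_derivative_mult_right[OF has_derivative_inner[OF dX2 dX]]])
       (auto simp: fun_eq_iff inner_add_left inner_add_right inner_commute algebra_simps)
qed (use d d2_cont[OF d] in \<open>auto simp: d2_def intro!: continuous_intros\<close>)

lemma fd_split:
  fixes g :: "real \<times> real \<Rightarrow> 'b::real_normed_vector"
  assumes "g differentiable (at w)"
  shows "(g has_derivative (\<lambda>h. fst h *\<^sub>R frechet_derivative g (at w) (1, 0) + snd h *\<^sub>R frechet_derivative g (at w) (0, 1))) (at w)"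
proof -
  have d: "(g has_derivative frechet_derivative g (at w)) (at w)"
    using assms frechet_derivative_works by blast
  then have l: "linear (frechet_derivative g (at w))" using has_derivative_linear by blast
  have eq: "frechet_derivative g (at w) h = fst h *\<^sub>R frechet_derivative g (at w) (1, 0) + snd h *\<^sub>R frechet_derivative g (at w) (0, 1)" for h
  proof -
    have "h = fst h *\<^sub>R (1, 0) + snd h *\<^sub>R (0, 1)" by (simp add: prod_eq_iff)
    then have "frechet_derivative g (at w) h = frechet_derivative g (at w) (fst h *\<^sub>R (1, 0) + snd h *\<^sub>R (0, 1))" by simp
    also have "\<dots> = frechet_derivative g (at w) (fst h *\<^sub>R (1, 0)) + frechet_derivative g (at w) (snd h *\<^sub>R (0, 1))"
      by (rule linear_add[OF l])
    also have "\<dots> = fst h *\<^sub>R frechet_derivative g (at w) (1, 0) + snd h *\<^sub>R frechet_derivative g (at w) (0, 1)"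
      by (simp only: linear_cmul[OF l])
    finally show ?thesis .
  qed
  show ?thesis by (rule has_derivative_eq_rhs[OF d]) (rule ext, rule eq)
qed

lemma basis_10: "((1::real), (0::real)) \<in> Basis" and basis_01: "((0::real), (1::real)) \<in> Basis"
  by (auto simp: Basis_prod_def)

lemma smooth_d2:
  fixes X :: "real \<times> real \<Rightarrow> real^3"
  assumes "smooth_on U X"
  shows "d2 U X (Du X) (Dv X) (Du (Du X)) (Dv (Du X)) (Du (Dv X)) (Dv (Dv X))"
proof -
  have c2: "Ck_on (Suc (Suc 0)) U X" using assms by (simp add: smooth_on_def)
  have du: "Du X = (\<lambda>x. frechet_derivative X (at x) (1, 0))" by (simp add: fun_eq_iff Du_def)
  have dv: "Dv X = (\<lambda>x. frechet_derivative X (at x) (0, 1))" by (simp add: fun_eq_iff Dv_def)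
  have A: "\<forall>x\<in>U. X differentiable (at x)" using c2 by simp
  have B: "\<forall>x\<in>U. Du X differentiable (at x)" "\<forall>x\<in>U. Dv X differentiable (at x)"
    using c2 basis_10 basis_01 unfolding du dv by auto
  have C: "continuous_on U (\<lambda>x. frechet_derivative (Du X) (at x) j)"
    "continuous_on U (\<lambda>x. frechet_derivative (Dv X) (at x) j)" if "j \<in> Basis" for j
    using c2 basis_10 basis_01 that unfolding du dv by auto
  show ?thesis unfolding d2_def
  proof (intro conjI ballI)
    fix w assume w: "w \<in> U"
    show "(X has_derivative (\<lambda>h. fst h *\<^sub>R Du X w + snd h *\<^sub>R Dv X w)) (at w)"
      using fd_split[of X w] A w by (simp add: Du_def Dv_def)
    show "(Du X has_derivative (\<lambda>h. fst h *\<^sub>R Du (Du X) w + snd h *\<^sub>R Dv (Du X) w)) (at w)"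
      using fd_split[of "Du X" w] B w by (simp add: Du_def[of "Du X"] Dv_def[of "Du X"])
    show "(Dv X has_derivative (\<lambda>h. fst h *\<^sub>R Du (Dv X) w + snd h *\<^sub>R Dv (Dv X) w)) (at w)"
      using fd_split[of "Dv X" w] B w by (simp add: Du_def[of "Dv X"] Dv_def[of "Dv X"])
  next
    show "continuous_on U (Du (Du X))" using C[OF basis_10] by (simp add: Du_def[abs_def])
    show "continuous_on U (Dv (Du X))" using C[OF basis_01] by (simp add: Du_def[abs_def] Dv_def[abs_def])
    show "continuous_on U (Du (Dv X))" using C[OF basis_10] by (simp add: Du_def[abs_def] Dv_def[abs_def])
    show "continuous_on U (Dv (Dv X))" using C[OF basis_01] by (simp add: Dv_def[abs_def])
  qed
qed

lemma gram_pos: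
  fixes X :: "real \<times> real \<Rightarrow> real^3"
  assumes dX: "(X has_derivative (\<lambda>h. fst h *\<^sub>R A + snd h *\<^sub>R B)) (at w)"
    and inj: "inj (frechet_derivative X (at w))"
  shows "(A \<bullet> A) * (B \<bullet> B) - (A \<bullet> B)\<^sup>2 > 0"
proof -
  have fd: "frechet_derivative X (at w) = (\<lambda>h. fst h *\<^sub>R A + snd h *\<^sub>R B)"
    using frechet_derivative_at[OF dX] by simp
  have ge: "(A \<bullet> B)\<^sup>2 \<le> (A \<bullet> A) * (B \<bullet> B)"
    using Cauchy_Schwarz_ineq by blast
  show ?thesis
  proof (rule ccontr)
    assume "\<not> ?thesis"
    then have D0: "(A \<bullet> A) * (B \<bullet> B) - (A \<bullet> B)\<^sup>2 = 0" using ge by linarith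
    define V where "V = (B \<bullet> B) *\<^sub>R A - (A \<bullet> B) *\<^sub>R B"
    have "V \<bullet> V = (B \<bullet> B) * ((A \<bullet> A) * (B \<bullet> B) - (A \<bullet> B)\<^sup>2)"
      unfolding V_def by (simp add: inner_diff_left inner_diff_right inner_commute power2_eq_square algebra_simps)
    then have "V = 0" using D0 by simp
    then have "frechet_derivative X (at w) (B \<bullet> B, - (A \<bullet> B)) = frechet_derivative X (at w) (0, 0)"
      unfolding fd V_def by simp
    then have "B \<bullet> B = 0" using inj unfolding inj_def by blast
    then have "B = 0" by simp
    then have "frechet_derivative X (at w) (0, 1) = frechet_derivative X (at w) (0, 0)"
      unfolding fd by simp
    then have "((0::real), (1::real)) = (0, 0)" using inj unfolding inj_def by blast
    then show False by simp
  qed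
qed



definition Bl :: "real \<Rightarrow> real \<Rightarrow> real \<Rightarrow> real \<Rightarrow> (real \<times> real) \<Rightarrow>\<^sub>L (real \<times> real)" where
  "Bl a b c d = Blinfun (\<lambda>h. (a * fst h + b * snd h, c * fst h + d * snd h))"

lemma Bl_apply: "blinfun_apply (Bl a b c d) h = (a * fst h + b * snd h, c * fst h + d * snd h)"
proof -
  have "bounded_linear (\<lambda>h::real \<times> real. (a * fst h + b * snd h, c * fst h + d * snd h))"
    by (auto intro!: bounded_linear_intros)
  then show ?thesis by (simp add: Bl_def bounded_linear_Blinfun_apply)
qed

lemma Bl_decomp: "Bl a b c d = a *\<^sub>R Bl 1 0 0 0 + b *\<^sub>R Bl 0 1 0 0 + c *\<^sub>R Bl 0 0 1 0 + d *\<^sub>R Bl 0 0 0 1"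
  by (rule blinfun_eqI) (simp add: Bl_apply blinfun.add_left blinfun.scaleR_left)

lemma Bl_cont:
  assumes "continuous_on U a" "continuous_on U b" "continuous_on U c" "continuous_on U d"
  shows "continuous_on U (\<lambda>w. Bl (a w) (b w) (c w) (d w))"
  using assms by (subst Bl_decomp) (intro continuous_intros)

lemma local_onto_sphere:
  fixes X X1 X2 :: "real \<times> real \<Rightarrow> real^3" and N0 :: "real^3"
  assumes U: "open U" and w0: "w0 \<in> U"
    and dX: "\<And>w. w \<in> U \<Longrightarrow> (X has_derivative (\<lambda>h. fst h *\<^sub>R X1 w + snd h *\<^sub>R X2 w)) (at w)"
    and c1: "continuous_on U X1" and c2: "continuous_on U X2"
    and sph: "\<And>w. w \<in> U \<Longrightarrow> X w \<bullet> X w = R\<^sup>2" and R: "R > 0"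
    and D: "(X1 w0 \<bullet> X1 w0) * (X2 w0 \<bullet> X2 w0) - (X1 w0 \<bullet> X2 w0)\<^sup>2 > 0"
    and N0: "N0 \<bullet> N0 = 1" "N0 \<bullet> X1 w0 = 0" "N0 \<bullet> X2 w0 = 0"
    and q: "X w0 \<bullet> X1 w0 = 0" "X w0 \<bullet> X2 w0 = 0"
  shows "\<exists>\<epsilon>>0. \<forall>y. norm y = R \<and> dist y (X w0) < \<epsilon> \<longrightarrow> y \<in> X ` U"
proof -
  define A0 where "A0 = X1 w0"
  define B0 where "B0 = X2 w0"
  define F where "F = (\<lambda>w. (X w \<bullet> A0, X w \<bullet> B0))"
  define f' where "f' = (\<lambda>w. Bl (X1 w \<bullet> A0) (X2 w \<bullet> A0) (X1 w \<bullet> B0) (X2 w \<bullet> B0))"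
  have derF: "(F has_derivative blinfun_apply (f' w)) (at w)" if "w \<in> U" for w
  proof -
    have "(F has_derivative (\<lambda>h. (X w \<bullet> 0 + (fst h *\<^sub>R X1 w + snd h *\<^sub>R X2 w) \<bullet> A0,
                                 X w \<bullet> 0 + (fst h *\<^sub>R X1 w + snd h *\<^sub>R X2 w) \<bullet> B0))) (at w)"
      unfolding F_def
      by (intro has_derivative_Pair has_derivative_inner[OF dX[OF that]] has_derivative_const)
    then show ?thesis
      by (rule has_derivative_eq_rhs) (auto simp: f'_def Bl_apply fun_eq_iff inner_add_left)
  qed
  have contf: "continuous_on U f'" unfolding f'_def
    by (intro Bl_cont continuous_intros c1 c2)
  define E0 where "E0 = A0 \<bullet> A0"
  define F0 where "F0 = A0 \<bullet> B0"
  define G0 where "G0 = B0 \<bullet> B0"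
  define D0 where "D0 = E0 * G0 - F0\<^sup>2"
  have D0: "D0 \<noteq> 0" using D by (simp add: D0_def E0_def F0_def G0_def A0_def B0_def)
  have fw0: "f' w0 = Bl E0 F0 F0 G0"
    by (simp add: f'_def E0_def F0_def G0_def A0_def B0_def inner_commute)
  have invf: "Bl (G0 / D0) (- F0 / D0) (- F0 / D0) (E0 / D0) o\<^sub>L f' w0 = id_blinfun"
  proof (rule blinfun_eqI)
    fix h :: "real \<times> real"
    have "G0 / D0 * (E0 * fst h + F0 * snd h) + - F0 / D0 * (F0 * fst h + G0 * snd h) = fst h"
      using D0 by (simp add: field_simps) (simp add: D0_def power2_eq_square algebra_simps)
    moreover have "- F0 / D0 * (E0 * fst h + F0 * snd h) + E0 / D0 * (F0 * fst h + G0 * snd h) = snd h"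
      using D0 by (simp add: field_simps) (simp add: D0_def power2_eq_square algebra_simps)
    ultimately show "blinfun_apply (Bl (G0 / D0) (- F0 / D0) (- F0 / D0) (E0 / D0) o\<^sub>L f' w0) h = blinfun_apply id_blinfun h"
      by (simp add: fw0 Bl_apply prod_eq_iff)
  qed
  obtain U' V g g' where U': "open U'" "U' \<subseteq> U" "w0 \<in> U'" and V: "open V" "F w0 \<in> V"
    and hom: "homeomorphism U' V F g"
    by (rule inverse_function_theorem[OF U derF contf w0 invf]) blast+
  define q0 where "q0 = X w0"
  have cX: "continuous_on U X"
    using dX by (meson continuous_at_imp_continuous_on has_derivative_continuous)
  define U'' where "U'' = U' \<inter> X -` {y. q0 \<bullet> y > 0}"
  have oU'': "open U''" unfolding U''_def
    by (rule continuous_open_preimage) (use continuous_on_subset[OF cX U'(2)] U'(1) open_halfspace_gt in auto)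
  have w0U'': "w0 \<in> U''" using U'(3) sph[OF w0] R by (simp add: U''_def q0_def)
  have "openin (top_of_set V) (F ` U'')"
    by (rule homeomorphism_imp_open_map[OF hom]) (use oU'' in \<open>auto simp: U''_def intro: open_openin_trans[OF U'(1)]\<close>)
  then have oFU: "open (F ` U'')" using V(1) openin_open_trans by blast
  define \<pi> where "\<pi> = (\<lambda>y::real^3. (y \<bullet> A0, y \<bullet> B0))"
  have cpi: "continuous_on UNIV \<pi>" unfolding \<pi>_def by (intro continuous_intros)
  define Ob where "Ob = UNIV \<inter> \<pi> -` (F ` U'') \<inter> {y. q0 \<bullet> y > 0}"
  have oO: "open Ob" unfolding Ob_def
    by (intro open_Int continuous_open_preimage[OF cpi] oFU open_halfspace_gt) auto
  have q0O: "q0 \<in> Ob" using w0U'' sph[OF w0] R by (auto simp: Ob_def \<pi>_def F_def q0_def)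
  obtain \<epsilon> where \<epsilon>: "\<epsilon> > 0" "ball q0 \<epsilon> \<subseteq> Ob" using oO q0O open_contains_ball by blast
  have q0N: "q0 = (N0 \<bullet> q0) *\<^sub>R N0"
    using decomp[OF D N0, of q0] q by (simp add: q0_def inner_commute)
  show ?thesis
  proof (intro exI[of _ \<epsilon>] conjI allI impI)
    show "\<epsilon> > 0" by (rule \<epsilon>(1))
    fix y :: "real^3" assume y: "norm y = R \<and> dist y (X w0) < \<epsilon>"
    then have yO: "y \<in> Ob" using \<epsilon>(2) by (auto simp: q0_def dist_commute)
    then obtain w where w: "w \<in> U''" "\<pi> y = F w" by (auto simp: Ob_def)
    have wU: "w \<in> U" using w(1) U'(2) by (auto simp: U''_def)
    have yq: "q0 \<bullet> y > 0" using yO by (simp add: Ob_def)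
    have xq: "q0 \<bullet> X w > 0" using w(1) by (simp add: U''_def)
    define Z where "Z = y - X w"
    have zA: "Z \<bullet> X1 w0 = 0" and zB: "Z \<bullet> X2 w0 = 0"
      using w(2) by (auto simp: Z_def \<pi>_def F_def A0_def B0_def inner_diff_left)
    have Zn: "Z = (N0 \<bullet> Z) *\<^sub>R N0"
      using decomp[OF D N0, of Z] zA zB by (simp add: inner_commute)
    define t where "t = N0 \<bullet> Z"
    define \<kappa> where "\<kappa> = N0 \<bullet> q0"
    have yeq: "y = X w + t *\<^sub>R N0" using Zn by (simp add: Z_def t_def algebra_simps)
    have "y \<bullet> y = R\<^sup>2" using y by (simp add: power2_norm_eq_inner[symmetric])
    moreover have "X w \<bullet> X w = R\<^sup>2" by (rule sph[OF wU])
    ultimately have "2 * t * (X w \<bullet> N0) + t * t = 0"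
      unfolding yeq using N0(1) by (simp add: inner_add_left inner_add_right inner_commute algebra_simps)
    have "t = 0"
    proof (rule ccontr)
      assume "t \<noteq> 0"
      have "t * (2 * (X w \<bullet> N0) + t) = 0" using \<open>2 * t * (X w \<bullet> N0) + t * t = 0\<close>
        by (simp add: distrib_left mult.assoc mult.left_commute)
      then have "2 * (X w \<bullet> N0) + t = 0" using \<open>t \<noteq> 0\<close> by simp
      then have tt: "t = -2 * (X w \<bullet> N0)" by simp
      have "q0 \<bullet> y = \<kappa> * (N0 \<bullet> y)" by (subst q0N) (simp add: \<kappa>_def)
      also have "N0 \<bullet> y = N0 \<bullet> X w + t" unfolding yeq using N0(1) by (simp add: inner_add_right)
      finally have e1: "q0 \<bullet> y = \<kappa> * (N0 \<bullet> X w + t)" .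
      have e2: "q0 \<bullet> X w = \<kappa> * (N0 \<bullet> X w)" by (subst q0N) (simp add: \<kappa>_def)
      have "q0 \<bullet> y = - (q0 \<bullet> X w)" using e1 e2 tt by (simp add: inner_commute algebra_simps)
      then show False using yq xq by simp
    qed
    then have "y = X w" using yeq by simp
    then show "y \<in> X ` U" using wU by blast
  qed
qed



definition "sq X w = X w \<bullet> X w"
definition "s1 X w = 2 * (Du X w \<bullet> X w)"
definition "s2 X w = 2 * (Dv X w \<bullet> X w)"
definition "s11 X w = 2 * (Du (Du X) w \<bullet> X w + Du X w \<bullet> Du X w)"
definition "s12 X w = 2 * (Dv (Du X) w \<bullet> X w + Du X w \<bullet> Dv X w)"
definition "s21 X w = 2 * (Du (Dv X) w \<bullet> X w + Dv X w \<bullet> Du X w)"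
definition "s22 X w = 2 * (Dv (Dv X) w \<bullet> X w + Dv X w \<bullet> Dv X w)"
definition "gE X w = Du X w \<bullet> Du X w"
definition "gF X w = Du X w \<bullet> Dv X w"
definition "gG X w = Dv X w \<bullet> Dv X w"
definition "gD X w = gE X w * gG X w - (gF X w)\<^sup>2"
definition "cA11 X w = gG X w / gD X w"
definition "cA12 X w = - gF X w / gD X w"
definition "cA22 X w = gE X w / gD X w"
definition "Pp X w = gG X w * (Du (Du X) w \<bullet> Du X w) - 2 * gF X w * (Dv (Du X) w \<bullet> Du X w) + gE X w * (Dv (Dv X) w \<bullet> Du X w)"
definition "Qq X w = gG X w * (Du (Du X) w \<bullet> Dv X w) - 2 * gF X w * (Dv (Du X) w \<bullet> Dv X w) + gE X w * (Dv (Dv X) w \<bullet> Dv X w)"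
definition "cB1 X w = - (gG X w * Pp X w - gF X w * Qq X w) / (gD X w)\<^sup>2"
definition "cB2 X w = - (gE X w * Qq X w - gF X w * Pp X w) / (gD X w)\<^sup>2"
definition "cC1 X w = cB1 X w - (gG X w * s1 X w - gF X w * s2 X w) / (gD X w * sq X w)"
definition "cC2 X w = cB2 X w - (gE X w * s2 X w - gF X w * s1 X w) / (gD X w * sq X w)"

lemma chart_pointwise:
  fixes X :: "real \<times> real \<Rightarrow> real^3" and N :: "real^3"
  assumes D: "gD X w > 0"
    and N: "N \<bullet> N = 1" "N \<bullet> Du X w = 0" "N \<bullet> Dv X w = 0"
    and nz: "X w \<noteq> 0"
    and mc: "mean_curv X N w = \<alpha> * (N \<bullet> X w) / (norm (X w))\<^sup>2"
  shows "cA11 X w * s11 X w + 2 * cA12 X w * s12 X w + cA22 X w * s22 X w + cB1 X w * s1 X w + cB2 X w * s2 X w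
           = 2 * \<alpha> * (N \<bullet> X w)\<^sup>2 / sq X w + 4"
    and "s1 X w = 0 \<Longrightarrow> s2 X w = 0 \<Longrightarrow> (N \<bullet> X w)\<^sup>2 = sq X w"
    and "\<alpha> = -2 \<Longrightarrow> cA11 X w * s11 X w + 2 * cA12 X w * s12 X w + cA22 X w * s22 X w + cC1 X w * s1 X w + cC2 X w * s2 X w = 0"
proof -
  define X1 where "X1 = Du X w"
  define X2 where "X2 = Dv X w"
  define X11 where "X11 = Du (Du X) w"
  define X12 where "X12 = Dv (Du X) w"
  define X22 where "X22 = Dv (Dv X) w"
  define Y where "Y = X w"
  define E where "E = X1 \<bullet> X1"
  define F where "F = X1 \<bullet> X2"
  define G where "G = X2 \<bullet> X2"
  define Dd where "Dd = E * G - F\<^sup>2"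
  have Dpos: "Dd > 0" using D by (simp add: Dd_def gD_def gE_def gF_def gG_def E_def F_def G_def X1_def X2_def)
  have D': "(X1 \<bullet> X1) * (X2 \<bullet> X2) - (X1 \<bullet> X2)\<^sup>2 > 0" using Dpos by (simp add: Dd_def E_def F_def G_def)
  have N': "N \<bullet> N = 1" "N \<bullet> X1 = 0" "N \<bullet> X2 = 0" using N by (auto simp: X1_def X2_def)
  define a where "a = ((X2 \<bullet> X2) * (Y \<bullet> X1) - (X1 \<bullet> X2) * (Y \<bullet> X2)) / ((X1 \<bullet> X1) * (X2 \<bullet> X2) - (X1 \<bullet> X2)\<^sup>2)"
  define b where "b = ((X1 \<bullet> X1) * (Y \<bullet> X2) - (X1 \<bullet> X2) * (Y \<bullet> X1)) / ((X1 \<bullet> X1) * (X2 \<bullet> X2) - (X1 \<bullet> X2)\<^sup>2)"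
  define c where "c = N \<bullet> Y"
  have xs: "Y = a *\<^sub>R X1 + b *\<^sub>R X2 + c *\<^sub>R N"
    unfolding a_def b_def c_def by (rule decomp[OF D' N'])
  have X1N: "X1 \<bullet> N = 0" "X2 \<bullet> N = 0" using N' by (auto simp: inner_commute)
  have ip: "V \<bullet> Y = a * (V \<bullet> X1) + b * (V \<bullet> X2) + c * (V \<bullet> N)" for V
    by (subst xs) (simp add: inner_add_right)
  have y1: "X1 \<bullet> Y = a * E + b * F" using ip[of X1] X1N by (simp add: E_def F_def)
  have y2: "X2 \<bullet> Y = a * F + b * G" using ip[of X2] X1N by (simp add: F_def G_def inner_commute)
  have sqY: "Y \<bullet> Y = a\<^sup>2 * E + 2 * a * b * F + b\<^sup>2 * G + c\<^sup>2"
  proof -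
    have "Y \<bullet> Y = a * (X1 \<bullet> Y) + b * (X2 \<bullet> Y) + c * (N \<bullet> Y)"
      by (subst (1) xs) (simp add: inner_add_left)
    also have "N \<bullet> Y = c" by (simp add: c_def)
    finally show ?thesis unfolding y1 y2 by (simp add: power2_eq_square algebra_simps)
  qed
  have sqpos: "Y \<bullet> Y > 0" using nz by (simp add: Y_def)
  have H: "mean_curv X N w = (((X11 \<bullet> N) * G - 2 * (X12 \<bullet> N) * F + (X22 \<bullet> N) * E) / Dd)"
    by (simp add: mean_curv_def Let_def X1_def X2_def X11_def X12_def X22_def E_def F_def G_def Dd_def)
  have H2: "mean_curv X N w = \<alpha> * c / (Y \<bullet> Y)"
    using mc by (simp add: c_def Y_def power2_norm_eq_inner)
  have main: "cA11 X w * s11 X w + 2 * cA12 X w * s12 X w + cA22 X w * s22 X w + cB1 X w * s1 X w + cB2 X w * s2 X w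
      = 2 * c * mean_curv X N w + 4"
  proof -
    have k: "(G / Dd) * (2 * ((a * (X11 \<bullet> X1) + b * (X11 \<bullet> X2) + c * (X11 \<bullet> N)) + E))
     + 2 * (- F / Dd) * (2 * ((a * (X12 \<bullet> X1) + b * (X12 \<bullet> X2) + c * (X12 \<bullet> N)) + F))
     + (E / Dd) * (2 * ((a * (X22 \<bullet> X1) + b * (X22 \<bullet> X2) + c * (X22 \<bullet> N)) + G))
     + (- (G * (G * (X11 \<bullet> X1) - 2 * F * (X12 \<bullet> X1) + E * (X22 \<bullet> X1)) - F * (G * (X11 \<bullet> X2) - 2 * F * (X12 \<bullet> X2) + E * (X22 \<bullet> X2))) / Dd\<^sup>2) * (2 * (a * E + b * F))
     + (- (E * (G * (X11 \<bullet> X2) - 2 * F * (X12 \<bullet> X2) + E * (X22 \<bullet> X2)) - F * (G * (X11 \<bullet> X1) - 2 * F * (X12 \<bullet> X1) + E * (X22 \<bullet> X1))) / Dd\<^sup>2) * (2 * (a * F + b * G))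
     = 2 * c * (((X11 \<bullet> N) * G - 2 * (X12 \<bullet> N) * F + (X22 \<bullet> N) * E) / Dd) + 4"
      by (rule keyid) (use Dpos in \<open>auto simp: Dd_def\<close>)
    have e1: "s11 X w = 2 * ((a * (X11 \<bullet> X1) + b * (X11 \<bullet> X2) + c * (X11 \<bullet> N)) + E)"
      using ip[of X11] by (simp add: s11_def X11_def X1_def Y_def E_def)
    have e2: "s12 X w = 2 * ((a * (X12 \<bullet> X1) + b * (X12 \<bullet> X2) + c * (X12 \<bullet> N)) + F)"
      using ip[of X12] by (simp add: s12_def X12_def X1_def X2_def Y_def F_def)
    have e3: "s22 X w = 2 * ((a * (X22 \<bullet> X1) + b * (X22 \<bullet> X2) + c * (X22 \<bullet> N)) + G)"
      using ip[of X22] by (simp add: s22_def X22_def X2_def Y_def G_def)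
    have e4: "s1 X w = 2 * (a * E + b * F)" using y1 by (simp add: s1_def X1_def Y_def)
    have e5: "s2 X w = 2 * (a * F + b * G)" using y2 by (simp add: s2_def X2_def Y_def)
    have e6: "cA11 X w = G / Dd" "cA12 X w = - F / Dd" "cA22 X w = E / Dd"
      by (simp_all add: cA11_def cA12_def cA22_def gD_def gE_def gF_def gG_def Dd_def E_def F_def G_def X1_def X2_def)
    have e7: "cB1 X w = - (G * (G * (X11 \<bullet> X1) - 2 * F * (X12 \<bullet> X1) + E * (X22 \<bullet> X1)) - F * (G * (X11 \<bullet> X2) - 2 * F * (X12 \<bullet> X2) + E * (X22 \<bullet> X2))) / Dd\<^sup>2"
      "cB2 X w = - (E * (G * (X11 \<bullet> X2) - 2 * F * (X12 \<bullet> X2) + E * (X22 \<bullet> X2)) - F * (G * (X11 \<bullet> X1) - 2 * F * (X12 \<bullet> X1) + E * (X22 \<bullet> X1))) / Dd\<^sup>2"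
      by (simp_all add: cB1_def cB2_def Pp_def Qq_def gD_def gE_def gF_def gG_def Dd_def E_def F_def G_def X1_def X2_def X11_def X12_def X22_def)
    show ?thesis unfolding e1 e2 e3 e4 e5 e6 e7 H using k by simp
  qed
  show "cA11 X w * s11 X w + 2 * cA12 X w * s12 X w + cA22 X w * s22 X w + cB1 X w * s1 X w + cB2 X w * s2 X w
           = 2 * \<alpha> * (N \<bullet> X w)\<^sup>2 / sq X w + 4"
    unfolding main H2 by (simp add: c_def Y_def sq_def power2_eq_square)
  show "(N \<bullet> X w)\<^sup>2 = sq X w" if "s1 X w = 0" "s2 X w = 0"
  proof -
    have "Y \<bullet> X1 = 0" "Y \<bullet> X2 = 0" using that by (auto simp: s1_def s2_def X1_def X2_def Y_def inner_commute)
    then have "a = 0" "b = 0" by (simp_all add: a_def b_def)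
    then show ?thesis using sqY by (simp add: c_def Y_def sq_def)
  qed
  assume al: "\<alpha> = -2"
  have grad: "(gG X w * s1 X w - gF X w * s2 X w) * s1 X w + (gE X w * s2 X w - gF X w * s1 X w) * s2 X w
      = 4 * Dd * (a\<^sup>2 * E + 2 * a * b * F + b\<^sup>2 * G)"
  proof -
    have e4: "s1 X w = 2 * (a * E + b * F)" using y1 by (simp add: s1_def X1_def Y_def)
    have e5: "s2 X w = 2 * (a * F + b * G)" using y2 by (simp add: s2_def X2_def Y_def)
    have e8: "gG X w = G" "gF X w = F" "gE X w = E" by (simp_all add: gE_def gF_def gG_def E_def F_def G_def X1_def X2_def)
    show ?thesis unfolding e4 e5 e8 Dd_def by (rule keygrad)
  qed
  have gD': "gD X w = Dd" by (simp add: gD_def gE_def gF_def gG_def Dd_def E_def F_def G_def X1_def X2_def)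
  have sq': "sq X w = Y \<bullet> Y" by (simp add: sq_def Y_def)
  have "cA11 X w * s11 X w + 2 * cA12 X w * s12 X w + cA22 X w * s22 X w + cC1 X w * s1 X w + cC2 X w * s2 X w
      = (cA11 X w * s11 X w + 2 * cA12 X w * s12 X w + cA22 X w * s22 X w + cB1 X w * s1 X w + cB2 X w * s2 X w)
        - ((gG X w * s1 X w - gF X w * s2 X w) * s1 X w + (gE X w * s2 X w - gF X w * s1 X w) * s2 X w) / (gD X w * sq X w)"
    by (simp add: cC1_def cC2_def algebra_simps add_divide_distrib diff_divide_distrib)
  also have "\<dots> = (2 * (-2) * c\<^sup>2 / (Y \<bullet> Y) + 4) - 4 * Dd * (Y \<bullet> Y - c\<^sup>2) / (Dd * (Y \<bullet> Y))"
    unfolding main H2 grad gD' sq' al using sqY by (simp add: power2_eq_square)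
  also have "\<dots> = 0" using sqpos Dpos by (simp add: field_simps)
  finally show "cA11 X w * s11 X w + 2 * cA12 X w * s12 X w + cA22 X w * s22 X w + cC1 X w * s1 X w + cC2 X w * s2 X w = 0" .
qed



lemma d2_zero: "d2 U (\<lambda>_. 0::real) (\<lambda>_. 0) (\<lambda>_. 0) (\<lambda>_. 0) (\<lambda>_. 0) (\<lambda>_. 0) (\<lambda>_. 0)"
  unfolding d2_def by (auto intro: has_derivative_eq_rhs[OF has_derivative_const])

lemma chart_U:
  fixes X :: "real \<times> real \<Rightarrow> real^3"
  assumes U: "open U" and sm: "smooth_on U X" and inj: "\<forall>w\<in>U. inj (frechet_derivative X (at w))"
  shows "d2 U (sq X) (s1 X) (s2 X) (s11 X) (s12 X) (s21 X) (s22 X)"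
    and "\<And>w. w \<in> U \<Longrightarrow> gD X w > 0"
    and "continuous_on U (cA11 X)" "continuous_on U (cA12 X)" "continuous_on U (cA22 X)"
    and "(\<And>w. w \<in> U \<Longrightarrow> X w \<noteq> 0) \<Longrightarrow> continuous_on U (cC1 X)"
    and "(\<And>w. w \<in> U \<Longrightarrow> X w \<noteq> 0) \<Longrightarrow> continuous_on U (cC2 X)"
    and "\<And>w. w \<in> U \<Longrightarrow> cA11 X w > 0 \<and> (cA12 X w)\<^sup>2 < cA11 X w * cA22 X w"
proof -
  have dX: "d2 U X (Du X) (Dv X) (Du (Du X)) (Dv (Du X)) (Du (Dv X)) (Dv (Dv X))"
    by (rule smooth_d2[OF sm])
  show ds: "d2 U (sq X) (s1 X) (s2 X) (s11 X) (s12 X) (s21 X) (s22 X)"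
    using d2_inner_self[OF dX]
    unfolding sq_def[abs_def] s1_def[abs_def] s2_def[abs_def] s11_def[abs_def] s12_def[abs_def] s21_def[abs_def] s22_def[abs_def] .
  show Dp: "gD X w > 0" if "w \<in> U" for w
  proof -
    have "(X has_derivative (\<lambda>h. fst h *\<^sub>R Du X w + snd h *\<^sub>R Dv X w)) (at w)"
      using dX that by (simp add: d2_def)
    from gram_pos[OF this bspec[OF inj that]] show ?thesis by (simp add: gD_def gE_def gF_def gG_def)
  qed
  have c0: "continuous_on U X" "continuous_on U (Du X)" "continuous_on U (Dv X)" using d2_cont[OF dX] by auto
  have c2: "continuous_on U (Du (Du X))" "continuous_on U (Dv (Du X))" "continuous_on U (Dv (Dv X))"
    using dX by (auto simp: d2_def)
  have cg: "continuous_on U (gE X)" "continuous_on U (gF X)" "continuous_on U (gG X)" "continuous_on U (gD X)"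
    unfolding gE_def[abs_def] gF_def[abs_def] gG_def[abs_def] gD_def[abs_def] using c0
    by (auto intro!: continuous_intros)
  have nz: "\<forall>w\<in>U. gD X w \<noteq> 0" using Dp by force
  show "continuous_on U (cA11 X)" unfolding cA11_def[abs_def] using cg nz by (intro continuous_intros) auto
  show "continuous_on U (cA12 X)" unfolding cA12_def[abs_def] using cg nz by (intro continuous_intros) auto
  show "continuous_on U (cA22 X)" unfolding cA22_def[abs_def] using cg nz by (intro continuous_intros) auto
  have cPQ: "continuous_on U (Pp X)" "continuous_on U (Qq X)"
    unfolding Pp_def[abs_def] Qq_def[abs_def] using cg c0 c2 by (auto intro!: continuous_intros)
  have cB: "continuous_on U (cB1 X)" "continuous_on U (cB2 X)"
    unfolding cB1_def[abs_def] cB2_def[abs_def] using cg cPQ nz by (auto intro!: continuous_intros)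
  have cs: "continuous_on U (sq X)" "continuous_on U (s1 X)" "continuous_on U (s2 X)" using d2_cont[OF ds] by auto
  show "continuous_on U (cC1 X)" if "\<And>w. w \<in> U \<Longrightarrow> X w \<noteq> 0"
  proof -
    have "\<forall>w\<in>U. gD X w * sq X w \<noteq> 0" using nz that by (simp add: sq_def)
    then show ?thesis unfolding cC1_def[abs_def] using cB cg cs by (intro continuous_intros) auto
  qed
  show "continuous_on U (cC2 X)" if "\<And>w. w \<in> U \<Longrightarrow> X w \<noteq> 0"
  proof -
    have "\<forall>w\<in>U. gD X w * sq X w \<noteq> 0" using nz that by (simp add: sq_def)
    then show ?thesis unfolding cC2_def[abs_def] using cB cg cs by (intro continuous_intros) auto
  qed
  show "cA11 X w > 0 \<and> (cA12 X w)\<^sup>2 < cA11 X w * cA22 X w" if "w \<in> U" for w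
  proof -
    have D: "gD X w > 0" using Dp[OF that] .
    have E: "gE X w \<ge> 0" "gG X w \<ge> 0" by (simp_all add: gE_def gG_def)
    have "gE X w * gG X w > 0" using D E by (simp add: gD_def) (smt (verit) zero_le_power2)
    then have G: "gG X w > 0" using E by (simp add: zero_less_mult_iff)
    have "(cA12 X w)\<^sup>2 = (gF X w)\<^sup>2 / (gD X w)\<^sup>2" by (simp add: cA12_def power_divide)
    also have "\<dots> < (gE X w * gG X w) / (gD X w)\<^sup>2"
      using D by (intro divide_strict_right_mono) (auto simp: gD_def)
    also have "\<dots> = cA11 X w * cA22 X w" by (simp add: cA11_def cA22_def power2_eq_square)
    finally show ?thesis using G D by (simp add: cA11_def)
  qed
qed



lemma chart_openin:
  assumes ch: "open U \<and> openin M (\<phi> ` U) \<and> homeomorphic_map (top_of_set U) (subtopology M (\<phi> ` U)) \<phi>"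
    and V: "open V" "V \<subseteq> U"
  shows "openin M (\<phi> ` V)"
proof -
  have om: "open_map (top_of_set U) (subtopology M (\<phi> ` U)) \<phi>"
    using ch homeomorphic_imp_open_map by blast
  have "openin (top_of_set U) V" using V by (metis inf.absorb_iff2 openin_open)
  then have "openin (subtopology M (\<phi> ` U)) (\<phi> ` V)" using om unfolding open_map_def by blast
  then show ?thesis using ch openin_trans_full by blast
qed

lemma pd_psd:
  fixes a11 a12 a22 :: real
  assumes "a11 > 0 \<and> a12\<^sup>2 < a11 * a22"
  shows "a11 \<ge> 0" "a22 \<ge> 0" "a12\<^sup>2 \<le> a11 * a22"
proof -
  have h: "a11 > 0" "a12\<^sup>2 < a11 * a22" using assms by auto
  moreover have "a12\<^sup>2 \<ge> 0" by simp
  ultimately have "a11 * a22 > 0" by linarith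
  then show "a22 \<ge> 0" using h(1) by (simp add: zero_less_mult_iff)
  show "a11 \<ge> 0" "a12\<^sup>2 \<le> a11 * a22" using h by auto
qed

theorem mainTheorem5:
  fixes \<alpha> :: real and M :: "'m topology"
    and A :: "((real \<times> real) set \<times> (real \<times> real \<Rightarrow> 'm)) set"
    and f \<nu> :: "'m \<Rightarrow> real^3"
  assumes "alpha_stationary \<alpha> M A f \<nu>"
    and "compact_space M" and "connected_space M" and "topspace M \<noteq> {}"
  shows "(\<exists>r>0. f ` topspace M = sphere 0 r) \<and> \<alpha> = -2"
proof -
  have os: "oriented_immersed_surface M A f \<nu>" and nz0: "\<forall>p\<in>topspace M. f p \<noteq> 0"
    and mc0: "\<forall>(U, \<phi>) \<in> A. \<forall>w\<in>U. mean_curv (f \<circ> \<phi>) (\<nu> (\<phi> w)) w = \<alpha> * (\<nu> (\<phi> w) \<bullet> f (\<phi> w)) / (norm (f (\<phi> w)))\<^sup>2"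
    using assms(1) unfolding alpha_stationary_def by auto
  have ch0: "\<forall>(U, \<phi>) \<in> A. open U \<and> openin M (\<phi> ` U) \<and> homeomorphic_map (top_of_set U) (subtopology M (\<phi> ` U)) \<phi>"
    and cov0: "\<forall>p\<in>topspace M. \<exists>(U, \<phi>) \<in> A. p \<in> \<phi> ` U"
    and sm0: "\<forall>(U, \<phi>) \<in> A. smooth_on U (f \<circ> \<phi>) \<and> (\<forall>w\<in>U. inj (frechet_derivative (f \<circ> \<phi>) (at w)))"
    and nrm0: "\<forall>p\<in>topspace M. norm (\<nu> p) = 1"
    and perp0: "\<forall>(U, \<phi>) \<in> A. \<forall>w\<in>U. \<nu> (\<phi> w) \<bullet> Du (f \<circ> \<phi>) w = 0 \<and> \<nu> (\<phi> w) \<bullet> Dv (f \<circ> \<phi>) w = 0"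
    using os unfolding oriented_immersed_surface_def by auto
  have ch: "open U \<and> openin M (\<phi> ` U) \<and> homeomorphic_map (top_of_set U) (subtopology M (\<phi> ` U)) \<phi>"
    if "(U, \<phi>) \<in> A" for U \<phi> using ch0 that by fastforce
  have cov: "\<exists>U \<phi>. (U, \<phi>) \<in> A \<and> p \<in> \<phi> ` U" if "p \<in> topspace M" for p using cov0 that by fastforce
  have sm: "smooth_on U (f \<circ> \<phi>)" "\<And>w. w \<in> U \<Longrightarrow> inj (frechet_derivative (f \<circ> \<phi>) (at w))"
    if "(U, \<phi>) \<in> A" for U \<phi> using sm0 that by fastforce+
  have perp: "\<nu> (\<phi> w) \<bullet> Du (f \<circ> \<phi>) w = 0" "\<nu> (\<phi> w) \<bullet> Dv (f \<circ> \<phi>) w = 0"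
    if "(U, \<phi>) \<in> A" "w \<in> U" for U \<phi> w using perp0 that by fastforce+
  have mc: "mean_curv (f \<circ> \<phi>) (\<nu> (\<phi> w)) w = \<alpha> * (\<nu> (\<phi> w) \<bullet> (f \<circ> \<phi>) w) / (norm ((f \<circ> \<phi>) w))\<^sup>2"
    if "(U, \<phi>) \<in> A" "w \<in> U" for U \<phi> w using mc0 that by fastforce
  have inM: "\<phi> w \<in> topspace M" if "(U, \<phi>) \<in> A" "w \<in> U" for U \<phi> w
    using ch[OF that(1)] openin_subset that(2) by fastforce
  have NN: "\<nu> (\<phi> w) \<bullet> \<nu> (\<phi> w) = 1" if "(U, \<phi>) \<in> A" "w \<in> U" for U \<phi> w
    using nrm0 inM[OF that] by (metis norm_eq_1 )
  have Xnz: "(f \<circ> \<phi>) w \<noteq> 0" if "(U, \<phi>) \<in> A" "w \<in> U" for U \<phi> w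
    using nz0 inM[OF that] by simp
  have contf: "continuous_map M euclidean f"
    unfolding continuous_map_def
  proof (intro conjI allI impI)
    show "f \<in> topspace M \<rightarrow> topspace euclidean" by simp
    fix T :: "(real^3) set" assume "openin euclidean T"
    then have T: "open T" by simp
    show "openin M {x \<in> topspace M. f x \<in> T}"
    proof (subst openin_subopen, intro ballI)
      fix p assume p: "p \<in> {x \<in> topspace M. f x \<in> T}"
      obtain U \<phi> where U\<phi>: "(U, \<phi>) \<in> A" "p \<in> \<phi> ` U" using cov p by blast
      then obtain w where w: "w \<in> U" "p = \<phi> w" by blast
      have oU: "open U" using ch[OF U\<phi>(1)] by blast
      have cX: "continuous_on U (f \<circ> \<phi>)" using d2_cont(1)[OF smooth_d2[OF sm(1)[OF U\<phi>(1)]]] .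
      define V where "V = U \<inter> (f \<circ> \<phi>) -` T"
      have oV: "open V" unfolding V_def by (rule continuous_open_preimage[OF cX oU T])
      show "\<exists>T'. openin M T' \<and> p \<in> T' \<and> T' \<subseteq> {x \<in> topspace M. f x \<in> T}"
      proof (intro exI conjI)
        show "openin M (\<phi> ` V)" by (rule chart_openin[OF ch[OF U\<phi>(1)] oV]) (auto simp: V_def)
        show "p \<in> \<phi> ` V" using w p by (auto simp: V_def)
        show "\<phi> ` V \<subseteq> {x \<in> topspace M. f x \<in> T}" using inM[OF U\<phi>(1)] by (auto simp: V_def)
      qed
    qed
  qed
  define K where "K = f ` topspace M"
  have cK: "compact K"
    using image_compactin[OF assms(2)[unfolded compact_space_def] contf] by (simp add: K_def)
  have neK: "K \<noteq> {}" using assms(4) by (simp add: K_def)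
  have cdot: "continuous_on K (\<lambda>y::real^3. y \<bullet> y)" by (intro continuous_intros)
  obtain ymax where ymax: "ymax \<in> K" "\<And>y. y \<in> K \<Longrightarrow> y \<bullet> y \<le> ymax \<bullet> ymax"
    using continuous_attains_sup[OF cK neK cdot] by blast
  obtain ymin where ymin: "ymin \<in> K" "\<And>y. y \<in> K \<Longrightarrow> ymin \<bullet> ymin \<le> y \<bullet> y"
    using continuous_attains_inf[OF cK neK cdot] by blast
  define Mx where "Mx = ymax \<bullet> ymax"
  have sqK: "sq (f \<circ> \<phi>) w = (f (\<phi> w)) \<bullet> (f (\<phi> w))" for \<phi> w by (simp add: sq_def)
  have inK: "f (\<phi> w) \<in> K" if "(U, \<phi>) \<in> A" "w \<in> U" for U \<phi> w using inM[OF that] by (simp add: K_def)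
  have le: "2 * \<alpha> + 4 \<le> 0"
  proof -
    obtain pm where pm: "pm \<in> topspace M" "f pm = ymax" using ymax(1) by (auto simp: K_def)
    obtain U \<phi> where U\<phi>: "(U, \<phi>) \<in> A" "pm \<in> \<phi> ` U" using cov pm by blast
    then obtain w0 where w0: "w0 \<in> U" "pm = \<phi> w0" by blast
    let ?X = "f \<circ> \<phi>"
    have oU: "open U" using ch[OF U\<phi>(1)] by blast
    have injU: "\<forall>w\<in>U. inj (frechet_derivative (f \<circ> \<phi>) (at w))" using sm(2)[OF U\<phi>(1)] by blast
    note cU = chart_U[OF oU sm(1)[OF U\<phi>(1)] injU]
    have mx: "sq ?X w \<le> sq ?X w0" if "w \<in> U" for w
      using ymax(2)[OF inK[OF U\<phi>(1) that]] w0 pm by (simp add: sqK)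
    have pd: "cA11 ?X w0 > 0 \<and> (cA12 ?X w0)\<^sup>2 < cA11 ?X w0 * cA22 ?X w0" using cU(8)[OF w0(1)] .
    have Lle: "cA11 ?X w0 * s11 ?X w0 + 2 * cA12 ?X w0 * s12 ?X w0 + cA22 ?X w0 * s22 ?X w0
             + cB1 ?X w0 * s1 ?X w0 + cB2 ?X w0 * s2 ?X w0 \<le> 0"
      by (rule max_op_le[OF oU cU(1) w0(1) mx]) (use pd_psd[OF pd] in auto)
    have g0: "s1 ?X w0 = 0" "s2 ?X w0 = 0" using maxtest(1,2)[OF oU cU(1) w0(1) mx] by auto
    note cp = chart_pointwise[OF cU(2)[OF w0(1)] NN[OF U\<phi>(1) w0(1)] perp[OF U\<phi>(1) w0(1)] Xnz[OF U\<phi>(1) w0(1)] mc[OF U\<phi>(1) w0(1)]]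
    have sqp: "sq ?X w0 > 0" using Xnz[OF U\<phi>(1) w0(1)] by (simp add: sq_def)
    have "2 * \<alpha> * (\<nu> (\<phi> w0) \<bullet> ?X w0)\<^sup>2 / sq ?X w0 + 4 \<le> 0" using Lle cp(1) by simp
    then show ?thesis using cp(2)[OF g0] sqp by simp
  qed
  have ge: "2 * \<alpha> + 4 \<ge> 0"
  proof -
    obtain pm where pm: "pm \<in> topspace M" "f pm = ymin" using ymin(1) by (auto simp: K_def)
    obtain U \<phi> where U\<phi>: "(U, \<phi>) \<in> A" "pm \<in> \<phi> ` U" using cov pm by blast
    then obtain w0 where w0: "w0 \<in> U" "pm = \<phi> w0" by blast
    let ?X = "f \<circ> \<phi>"
    have oU: "open U" using ch[OF U\<phi>(1)] by blast
    have injU: "\<forall>w\<in>U. inj (frechet_derivative (f \<circ> \<phi>) (at w))" using sm(2)[OF U\<phi>(1)] by blast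
    note cU = chart_U[OF oU sm(1)[OF U\<phi>(1)] injU]
    note dn = d2_add_cmult[OF d2_zero cU(1), of "-1"]
    have mx: "0 + -1 * sq ?X w \<le> 0 + -1 * sq ?X w0" if "w \<in> U" for w
      using ymin(2)[OF inK[OF U\<phi>(1) that]] w0 pm by (simp add: sqK)
    have pd: "cA11 ?X w0 > 0 \<and> (cA12 ?X w0)\<^sup>2 < cA11 ?X w0 * cA22 ?X w0" using cU(8)[OF w0(1)] .
    have Lle: "cA11 ?X w0 * (0 + -1 * s11 ?X w0) + 2 * cA12 ?X w0 * (0 + -1 * s12 ?X w0) + cA22 ?X w0 * (0 + -1 * s22 ?X w0)
             + cB1 ?X w0 * (0 + -1 * s1 ?X w0) + cB2 ?X w0 * (0 + -1 * s2 ?X w0) \<le> 0"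
      by (rule max_op_le[OF oU dn w0(1)]) (use mx pd_psd[OF pd] in auto)
    have g0: "s1 ?X w0 = 0" "s2 ?X w0 = 0" using maxtest(1,2)[OF oU dn w0(1)] mx by auto
    note cp = chart_pointwise[OF cU(2)[OF w0(1)] NN[OF U\<phi>(1) w0(1)] perp[OF U\<phi>(1) w0(1)] Xnz[OF U\<phi>(1) w0(1)] mc[OF U\<phi>(1) w0(1)]]
    have sqp: "sq ?X w0 > 0" using Xnz[OF U\<phi>(1) w0(1)] by (simp add: sq_def)
    have "- (cA11 ?X w0 * s11 ?X w0 + 2 * cA12 ?X w0 * s12 ?X w0 + cA22 ?X w0 * s22 ?X w0
             + cB1 ?X w0 * s1 ?X w0 + cB2 ?X w0 * s2 ?X w0) \<le> 0" using Lle by (simp add: algebra_simps)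
    then have "2 * \<alpha> * (\<nu> (\<phi> w0) \<bullet> ?X w0)\<^sup>2 / sq ?X w0 + 4 \<ge> 0" using cp(1) by simp
    then show ?thesis using cp(2)[OF g0] sqp by simp
  qed
  have al: "\<alpha> = -2" using le ge by simp
  define S where "S = {p \<in> topspace M. f p \<in> {y. y \<bullet> y = Mx}}"
  have clS: "closedin M S" unfolding S_def
  proof (rule closedin_continuous_map_preimage[OF contf])
    have "closed {y::real^3. y \<bullet> y = Mx}"
      by (rule closed_Collect_eq) (intro continuous_intros)+
    then show "closedin euclidean {y::real^3. y \<bullet> y = Mx}" by simp
  qed
  have opS: "openin M S"
  proof (subst openin_subopen, intro ballI)
    fix p assume p: "p \<in> S"
    have pM: "p \<in> topspace M" using p by (simp add: S_def)
    obtain U \<phi> where U\<phi>: "(U, \<phi>) \<in> A" "p \<in> \<phi> ` U" using cov[OF pM] by blast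
    then obtain w0 where w0: "w0 \<in> U" "p = \<phi> w0" by blast
    let ?X = "f \<circ> \<phi>"
    have oU: "open U" using ch[OF U\<phi>(1)] by blast
    have injU: "\<forall>w\<in>U. inj (frechet_derivative (f \<circ> \<phi>) (at w))" using sm(2)[OF U\<phi>(1)] by blast
    note cU = chart_U[OF oU sm(1)[OF U\<phi>(1)] injU]
    have nzU: "\<And>w. w \<in> U \<Longrightarrow> ?X w \<noteq> 0" using Xnz[OF U\<phi>(1)] by blast
    have sw0: "sq ?X w0 = Mx" using p w0 by (simp add: S_def sqK)
    have mx: "sq ?X w \<le> sq ?X w0" if "w \<in> U" for w
      using ymax(2)[OF inK[OF U\<phi>(1) that]] sw0 by (simp add: sqK Mx_def)
    have L: "cA11 ?X w * s11 ?X w + 2 * cA12 ?X w * s12 ?X w + cA22 ?X w * s22 ?X w + cC1 ?X w * s1 ?X w + cC2 ?X w * s2 ?X w \<ge> 0"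
      if "w \<in> U" for w
      using chart_pointwise(3)[OF cU(2)[OF that] NN[OF U\<phi>(1) that] perp[OF U\<phi>(1) that] Xnz[OF U\<phi>(1) that] mc[OF U\<phi>(1) that] al]
      by simp
    obtain r where r: "r > 0" "\<forall>w\<in>ball w0 r. sq ?X w = sq ?X w0"
      using strong_max[OF oU cU(1) cU(3) cU(4) cU(5) cU(6)[OF nzU] cU(7)[OF nzU] cU(8) L w0(1) mx] by blast
    define V where "V = ball w0 r \<inter> U"
    show "\<exists>T. openin M T \<and> p \<in> T \<and> T \<subseteq> S"
    proof (intro exI conjI)
      show "openin M (\<phi> ` V)" by (rule chart_openin[OF ch[OF U\<phi>(1)]]) (use oU in \<open>auto simp: V_def\<close>)
      show "p \<in> \<phi> ` V" using w0 r(1) by (auto simp: V_def)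
      show "\<phi> ` V \<subseteq> S"
      proof
        fix x assume "x \<in> \<phi> ` V"
        then obtain w where w: "w \<in> V" "x = \<phi> w" by blast
        have "sq ?X w = Mx" using r(2) w(1) sw0 by (auto simp: V_def)
        then show "x \<in> S" using w inM[OF U\<phi>(1)] by (auto simp: S_def V_def sqK)
      qed
    qed
  qed
  obtain pm where pm: "pm \<in> topspace M" "f pm = ymax" using ymax(1) by (auto simp: K_def)
  have "S \<noteq> {}" using pm by (auto simp: S_def Mx_def)
  then have Sall: "S = topspace M" using assms(3) clS opS unfolding connected_space_clopen_in by blast
  have "ymax \<noteq> 0" using nz0 pm by metis
  then have Mxpos: "Mx > 0" by (simp add: Mx_def)
  define R where "R = sqrt Mx"
  have R: "R > 0" using Mxpos by (simp add: R_def)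
  have R2: "R\<^sup>2 = Mx" using Mxpos by (simp add: R_def)
  have allM: "f p \<bullet> f p = Mx" if "p \<in> topspace M" for p using Sall that by (auto simp: S_def)
  have Ksub: "K \<subseteq> sphere 0 R"
  proof
    fix y assume "y \<in> K"
    then obtain p where "p \<in> topspace M" "y = f p" by (auto simp: K_def)
    then have "y \<bullet> y = R\<^sup>2" using allM R2 by simp
    then have "(norm y)\<^sup>2 = R\<^sup>2" by (simp add: power2_norm_eq_inner)
    then have "norm y = R" using R by (simp add: power2_eq_iff_nonneg)
    then show "y \<in> sphere 0 R" by simp
  qed
  have opK: "openin (top_of_set (sphere 0 R)) K"
    unfolding openin_euclidean_subtopology_iff
  proof (intro conjI ballI)
    show "K \<subseteq> sphere 0 R" by (rule Ksub)
    fix q assume "q \<in> K"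
    then obtain p where p: "p \<in> topspace M" "q = f p" by (auto simp: K_def)
    obtain U \<phi> where U\<phi>: "(U, \<phi>) \<in> A" "p \<in> \<phi> ` U" using cov p by blast
    then obtain w0 where w0: "w0 \<in> U" "p = \<phi> w0" by blast
    let ?X = "f \<circ> \<phi>"
    have oU: "open U" using ch[OF U\<phi>(1)] by blast
    have injU: "\<forall>w\<in>U. inj (frechet_derivative (f \<circ> \<phi>) (at w))" using sm(2)[OF U\<phi>(1)] by blast
    note cU = chart_U[OF oU sm(1)[OF U\<phi>(1)] injU]
    have dX: "d2 U ?X (Du ?X) (Dv ?X) (Du (Du ?X)) (Dv (Du ?X)) (Du (Dv ?X)) (Dv (Dv ?X))"
      by (rule smooth_d2[OF sm(1)[OF U\<phi>(1)]])
    have sph: "?X w \<bullet> ?X w = R\<^sup>2" if "w \<in> U" for w using allM[OF inM[OF U\<phi>(1) that]] R2 by simp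
    have mx: "sq ?X w \<le> sq ?X w0" if "w \<in> U" for w using sph[OF that] sph[OF w0(1)] by (simp add: sq_def)
    have g0: "s1 ?X w0 = 0" "s2 ?X w0 = 0" using maxtest(1,2)[OF oU cU(1) w0(1) mx] by auto
    have qq: "?X w0 \<bullet> Du ?X w0 = 0" "?X w0 \<bullet> Dv ?X w0 = 0" using g0 by (auto simp: s1_def s2_def inner_commute)
    have D: "(Du ?X w0 \<bullet> Du ?X w0) * (Dv ?X w0 \<bullet> Dv ?X w0) - (Du ?X w0 \<bullet> Dv ?X w0)\<^sup>2 > 0"
      using cU(2)[OF w0(1)] by (simp add: gD_def gE_def gF_def gG_def)
    obtain \<epsilon> where \<epsilon>: "\<epsilon> > 0" "\<forall>y. norm y = R \<and> dist y (?X w0) < \<epsilon> \<longrightarrow> y \<in> ?X ` U"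
      using local_onto_sphere[OF oU w0(1), of ?X "Du ?X" "Dv ?X" R "\<nu> (\<phi> w0)"] dX d2_cont[OF dX] sph R D
        NN[OF U\<phi>(1) w0(1)] perp[OF U\<phi>(1) w0(1)] qq
      unfolding d2_def by blast
    show "\<exists>e>0. \<forall>x'\<in>sphere 0 R. dist x' q < e \<longrightarrow> x' \<in> K"
    proof (intro exI conjI ballI impI)
      show "\<epsilon> > 0" by (rule \<epsilon>(1))
      fix x' assume "x' \<in> sphere 0 R" "dist x' q < \<epsilon>"
      then have "x' \<in> ?X ` U" using \<epsilon>(2) p w0 by auto
      then show "x' \<in> K" using inK[OF U\<phi>(1)] by auto
    qed
  qed
  have clK: "closedin (top_of_set (sphere 0 R)) K"
    by (rule closed_subset[OF Ksub compact_imp_closed[OF cK]])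
  have "connected (sphere (0::real^3) R)" by (rule connected_sphere) simp
  then have "K = sphere 0 R" using opK clK neK unfolding connected_clopen by blast
  then show ?thesis using R al by (auto simp: K_def)
qed


end
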